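(* Let $G$ be a finite connected graph (loops and multiple edges allowed) and $T_0\subset G$ a spanning tree. Let $N=|E(G-T_0)|$, and let $Mesh(G,T_0)$ be the $N\times N$ mesh matrix and $Mesh^\#(G,T_0)=Y^t Y$ the reduced mesh matrix, so that $Mesh(G,T_0)=Id+Y^tY$. For $j=0,1,\dots,N$ let $ST_j(G,T_0)$ be the number of spanning trees $T$ of $G$ with $|E(T)\cap E(G-T_0)|=j$. Then $$\det((U+1)\,Id-Mesh(G,T_0))=\det(U\,Id-Mesh^\#(G,T_0))=U^N+\sum_{j=1}^N(-1)^j\,ST_j(G,T_0)\,U^{N-j}.$$ In particular, setting $U=-1$, $\det(Mesh(G,T_0))=\sum_{j=0}^N ST_j(G,T_0)$, the number of spanning trees of $G$.
   Context: Choose an orientation for every edge of $G$. List the edges of $E(G-T_0)$ as $\vec e_1,\dots,\vec e_N$ and those of $T_0$ as $\vec f_1,\dots,\vec f_M$, $M=|E(T_0)|$; $C_1(G;\mathbb R)$ is the real vector space with basis the oriented edges, with the standard inner product $\langle\cdot,\cdot\rangle$ making the edges orthonormal. For $\vec e_j$ directed from $P_j$ to $Q_j$: if $P_j=Q_j$ (a loop) put $D(\vec e_j)=0$; otherwise let $D(\vec e_j)\in C_1(T_0;\mathbb Z)$ be the 1-chain given by the unique simple path in $T_0$ from $Q_j$ to $P_j$, each of its edges taken with the orientation in which the path traverses it (so $\partial D(\vec e_j)=P_j-Q_j$). Put $Z[j]=\vec e_j+D(\vec e_j)$, an integral 1-cycle. The mesh matrix is $Mesh(G,T_0)=(\langle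 Z[i],Z[j]\rangle)_{1\le i,j\le N}$. Let $Y$ be the $M\times N$ matrix of $D$ with respect to the bases $\{\vec e_j\}$, $\{\vec f_k\}$ (entries $0,\pm1$), i.e. $Z[j]=\vec e_j+\sum_k Y_{kj}\vec f_k$; then $Mesh(G,T_0)=Id+Y^tY$ and $Mesh^\#(G,T_0):=Y^tY$. *)

theory Defs
  imports "Jordan_Normal_Form.Determinant"
begin

text \<open>A finite multigraph (loops and parallel edges allowed) is given by a vertex set V,
an edge set E and a map ends :: 'e => 'v * 'v. The map ends also fixes the chosen
orientation: edge e is directed from fst (ends e) to snd (ends e).\<close>

definition joins :: "('e \<Rightarrow> 'v \<times> 'v) \<Rightarrow> 'e \<Rightarrow> 'v \<Rightarrow> 'v \<Rightarrow> bool" where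
  "joins ends e a b \<longleftrightarrow> ends e = (a, b) \<or> ends e = (b, a)"

definition adj_rel :: "('e \<Rightarrow> 'v \<times> 'v) \<Rightarrow> 'e set \<Rightarrow> ('v \<times> 'v) set" where
  "adj_rel ends F = {(a, b). \<exists>e\<in>F. joins ends e a b}"

definition connected_on :: "'v set \<Rightarrow> ('e \<Rightarrow> 'v \<times> 'v) \<Rightarrow> 'e set \<Rightarrow> bool" where
  "connected_on V ends F \<longleftrightarrow> (\<forall>u\<in>V. \<forall>v\<in>V. (u, v) \<in> (adj_rel ends F)\<^sup>*)"

text \<open>A cycle in F: closed walk v0 e1 v1 ... ek vk = v0 with k >= 1, distinct edges
and distinct vertices v0..v(k-1) (loops are cycles of length 1, parallel edges give
cycles of length 2).\<close>
definition has_cycle :: "('e \<Rightarrow> 'v \<times> 'v) \<Rightarrow> 'e set \<Rightarrow> bool" where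
  "has_cycle ends F \<longleftrightarrow> (\<exists>vs es. es \<noteq> [] \<and> distinct es \<and> set es \<subseteq> F \<and>
      length vs = Suc (length es) \<and> hd vs = last vs \<and> distinct (butlast vs) \<and>
      (\<forall>i<length es. joins ends (es ! i) (vs ! i) (vs ! Suc i)))"

definition spanning_tree :: "'v set \<Rightarrow> 'e set \<Rightarrow> ('e \<Rightarrow> 'v \<times> 'v) \<Rightarrow> 'e set \<Rightarrow> bool" where
  "spanning_tree V E ends T \<longleftrightarrow> T \<subseteq> E \<and> connected_on V ends T \<and> \<not> has_cycle ends T"

definition is_path :: "('e \<Rightarrow> 'v \<times> 'v) \<Rightarrow> 'e set \<Rightarrow> 'v list \<Rightarrow> 'e list \<Rightarrow> 'v \<Rightarrow> 'v \<Rightarrow> bool" where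
  "is_path ends F vs es a b \<longleftrightarrow> length vs = Suc (length es) \<and> hd vs = a \<and> last vs = b \<and>
      distinct vs \<and> set es \<subseteq> F \<and> (\<forall>i<length es. joins ends (es ! i) (vs ! i) (vs ! Suc i))"

definition tree_path :: "('e \<Rightarrow> 'v \<times> 'v) \<Rightarrow> 'e set \<Rightarrow> 'v \<Rightarrow> 'v \<Rightarrow> 'v list \<times> 'e list" where
  "tree_path ends T0 a b = (THE p. is_path ends T0 (fst p) (snd p) a b)"

text \<open>Coefficient of the tree edge f in the 1-chain D(e): the path in T0 from Q to P,
where e is directed from P to Q; each edge is counted with sign +1 if traversed in its
orientation and -1 otherwise.\<close>
definition Dchain :: "('e \<Rightarrow> 'v \<times> 'v) \<Rightarrow> 'e set \<Rightarrow> 'e \<Rightarrow> 'e \<Rightarrow> int" where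
  "Dchain ends T0 e f =
    (if fst (ends e) = snd (ends e) then 0
     else (let p = tree_path ends T0 (snd (ends e)) (fst (ends e)); vs = fst p; es = snd p in
       (\<Sum>i<length es. if es ! i = f then (if ends f = (vs ! i, vs ! Suc i) then 1 else -1) else 0)))"

definition Zcycle :: "('e \<Rightarrow> 'v \<times> 'v) \<Rightarrow> 'e set \<Rightarrow> 'e \<Rightarrow> 'e \<Rightarrow> int" where
  "Zcycle ends T0 e x = (if x = e then 1 else 0) + Dchain ends T0 e x"

text \<open>Mesh matrix: Gram matrix of the Z[j] in C_1(G;R), edges orthonormal.
es enumerates E(G - T0).\<close>
definition mesh :: "'e set \<Rightarrow> ('e \<Rightarrow> 'v \<times> 'v) \<Rightarrow> 'e set \<Rightarrow> 'e list \<Rightarrow> real mat" where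
  "mesh E ends T0 es = mat (length es) (length es)
     (\<lambda>(i, j). real_of_int (\<Sum>x\<in>E. Zcycle ends T0 (es ! i) x * Zcycle ends T0 (es ! j) x))"

text \<open>The M x N matrix Y of D (fs enumerates E(T0)), and the reduced mesh matrix Y^t Y.\<close>
definition Ymat :: "('e \<Rightarrow> 'v \<times> 'v) \<Rightarrow> 'e set \<Rightarrow> 'e list \<Rightarrow> 'e list \<Rightarrow> real mat" where
  "Ymat ends T0 es fs = mat (length fs) (length es)
     (\<lambda>(k, j). real_of_int (Dchain ends T0 (es ! j) (fs ! k)))"

definition mesh_red :: "('e \<Rightarrow> 'v \<times> 'v) \<Rightarrow> 'e set \<Rightarrow> 'e list \<Rightarrow> 'e list \<Rightarrow> real mat" where
  "mesh_red ends T0 es fs = transpose_mat (Ymat ends T0 es fs) * Ymat ends T0 es fs"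

definition ST :: "'v set \<Rightarrow> 'e set \<Rightarrow> ('e \<Rightarrow> 'v \<times> 'v) \<Rightarrow> 'e set \<Rightarrow> nat \<Rightarrow> nat" where
  "ST V E ends T0 j = card {T. spanning_tree V E ends T \<and> card (T \<inter> (E - T0)) = j}"

end

theory Submission
  imports Defs "HOL-Library.FuncSet"
begin

definition detS :: "('a \<Rightarrow> 'a \<Rightarrow> 'b::comm_ring_1) \<Rightarrow> 'a set \<Rightarrow> 'b" where
  "detS A S = (\<Sum>p | p permutes S. of_int (sign p) * (\<Prod>i\<in>S. A i (p i)))"

lemma detS_cong:
  assumes "\<And>i j. i \<in> S \<Longrightarrow> j \<in> S \<Longrightarrow> A i j = B i j"
  shows "detS A S = detS B S"
  unfolding detS_def
proof (rule sum.cong[OF refl])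
  fix p assume "p \<in> {p. p permutes S}"
  hence p: "p permutes S" by simp
  have "(\<Prod>i\<in>S. A i (p i)) = (\<Prod>i\<in>S. B i (p i))"
    by (rule prod.cong[OF refl]) (use assms permutes_in_image[OF p] in auto)
  thus "of_int (sign p) * (\<Prod>i\<in>S. A i (p i)) = of_int (sign p) * (\<Prod>i\<in>S. B i (p i))" by simp
qed

lemma sign_inv_permutes: "finite S \<Longrightarrow> p permutes S \<Longrightarrow> sign (inv_into UNIV p) = sign p"
  by (metis permutes_imp_permutation sign_inverse)

lemma detS_transpose:
  assumes "finite S"
  shows "detS (\<lambda>i j. A j i) S = detS A S"
proof -
  have "detS (\<lambda>i j. A j i) S = (\<Sum>p | p permutes S. of_int (sign (inv_into UNIV p)) * (\<Prod>i\<in>S. A (inv_into UNIV p i) i))"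
    unfolding detS_def by (subst sum_permutations_inverse) simp
  also have "\<dots> = detS A S"
    unfolding detS_def
  proof (rule sum.cong[OF refl])
    fix p assume "p \<in> {p. p permutes S}"
    hence p: "p permutes S" by simp
    have "(\<Prod>i\<in>S. A (inv_into UNIV p i) i) = (\<Prod>i\<in>S. A (inv_into UNIV p (p i)) (p i))"
      using prod.permute[OF p, of "\<lambda>i. A (inv_into UNIV p i) i"] by (simp add: o_def)
    also have "\<dots> = (\<Prod>i\<in>S. A i (p i))" by (simp add: permutes_inverses(2)[OF p])
    finally show "of_int (sign (inv_into UNIV p)) * (\<Prod>i\<in>S. A (inv_into UNIV p i) i) = of_int (sign p) * (\<Prod>i\<in>S. A i (p i))"
      using sign_inv_permutes[OF assms p] by simp
  qed
  finally show ?thesis .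
qed

lemma detS_reindex:
  assumes S: "finite S" and h: "inj_on h S"
  shows "detS (\<lambda>i j. A (h i) (h j)) S = detS A (h ` S)"
proof -
  have bh: "bij_betw h S (h ` S)" using h by (simp add: bij_betw_imageI)
  have bh': "bij_betw (inv_into S h) (h ` S) S" by (rule bij_betw_inv_into[OF bh])
  show ?thesis unfolding detS_def
  proof (rule sum.reindex_bij_witness[where i="map_permutation (h ` S) (inv_into S h)" and j="map_permutation S h"])
    fix p assume "p \<in> {p. p permutes S}"
    hence p: "p permutes S" by simp
    show "map_permutation (h ` S) (inv_into S h) (map_permutation S h p) = p"
      by (rule map_permutation_compose_inv[OF bh p]) (simp add: h)
    show "map_permutation S h p \<in> {p. p permutes h ` S}"
      using map_permutation_permutes[OF bh p] by simp
    have "(\<Prod>y\<in>h ` S. A y (map_permutation S h p y)) = (\<Prod>i\<in>S. A (h i) (map_permutation S h p (h i)))"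
      by (subst prod.reindex[OF h]) (simp add: o_def)
    also have "\<dots> = (\<Prod>i\<in>S. A (h i) (h (p i)))"
      by (rule prod.cong[OF refl]) (simp add: map_permutation_apply[OF h])
    finally show "of_int (sign (map_permutation S h p)) * (\<Prod>y\<in>h ` S. A y (map_permutation S h p y))
      = of_int (sign p) * (\<Prod>i\<in>S. A (h i) (h (p i)))"
      using sign_map_permutation[OF h p S] by simp
  next
    fix q assume "q \<in> {p. p permutes h ` S}"
    hence q: "q permutes h ` S" by simp
    show "map_permutation S h (map_permutation (h ` S) (inv_into S h) q) = q"
      by (rule map_permutation_compose_inv[OF bh' q]) (simp add: f_inv_into_f)
    show "map_permutation (h ` S) (inv_into S h) q \<in> {p. p permutes S}"
      using map_permutation_permutes[OF bh' q] by simp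
  qed
qed

lemma detS_equal_rows:
  fixes A :: "'a \<Rightarrow> 'a \<Rightarrow> 'b::linordered_idom"
  assumes S: "finite S" and ij: "i \<in> S" "j \<in> S" "i \<noteq> j" and eq: "\<And>k. k \<in> S \<Longrightarrow> A i k = A j k"
  shows "detS A S = 0"
proof -
  let ?t = "Transposition.transpose i j"
  have t: "?t permutes S" using ij by (simp add: permutes_swap_id)
  let ?f = "\<lambda>p. of_int (sign p) * (\<Prod>k\<in>S. A k (p k)) :: 'b"
  have "detS A S = (\<Sum>p | p permutes S. ?f (p \<circ> ?t))"
    unfolding detS_def by (rule sum_permutations_compose_right[OF t])
  also have "\<dots> = (\<Sum>p | p permutes S. - ?f p)"
  proof (rule sum.cong[OF refl])
    fix p assume "p \<in> {p. p permutes S}"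
    hence p: "p permutes S" by simp
    have "sign (p \<circ> ?t) = - sign p"
      using sign_compose[OF permutes_imp_permutation[OF S p] permutes_imp_permutation[OF S t]] ij
      by (simp add: sign_swap_id)
    moreover have "(\<Prod>k\<in>S. A k ((p \<circ> ?t) k)) = (\<Prod>k\<in>S. A k (p k))"
    proof -
      have "(\<Prod>k\<in>S. A k ((p \<circ> ?t) k)) = (\<Prod>k\<in>S. A (?t k) ((p \<circ> ?t) (?t k)))"
        using prod.permute[OF t, of "\<lambda>k. A k ((p \<circ> ?t) k)"] by (simp add: o_def)
      also have "\<dots> = (\<Prod>k\<in>S. A k (p k))"
      proof (rule prod.cong[OF refl])
        fix k assume k: "k \<in> S"
        have pk: "p k \<in> S" using permutes_in_image[OF p] k by simp
        show "A (?t k) ((p \<circ> ?t) (?t k)) = A k (p k)"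
          using eq[OF pk] by (auto simp: Transposition.transpose_def)
      qed
      finally show ?thesis .
    qed
    ultimately show "?f (p \<circ> ?t) = - ?f p" by simp
  qed
  also have "\<dots> = - detS A S" unfolding detS_def by (simp add: sum_negf)
  finally show ?thesis by simp
qed

lemma detS_row_linear:
  assumes S: "finite S" and K: "finite K" and i0: "i0 \<in> S"
  shows "detS (A(i0 := (\<lambda>j. \<Sum>k\<in>K. c k * B k j))) S = (\<Sum>k\<in>K. c k * detS (A(i0 := B k)) S)"
proof -
  have pr: "(\<Prod>i\<in>S. (A(i0 := r)) i (p i)) = r (p i0) * (\<Prod>i\<in>S-{i0}. A i (p i))" for r p
  proof -
    have "(\<Prod>i\<in>S-{i0}. (A(i0 := r)) i (p i)) = (\<Prod>i\<in>S-{i0}. A i (p i))"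
      by (rule prod.cong) auto
    thus ?thesis using prod.remove[OF S i0, of "\<lambda>i. (A(i0 := r)) i (p i)"] by simp
  qed
  have "detS (A(i0 := (\<lambda>j. \<Sum>k\<in>K. c k * B k j))) S = (\<Sum>p | p permutes S. \<Sum>k\<in>K. c k * (of_int (sign p) * (B k (p i0) * (\<Prod>i\<in>S-{i0}. A i (p i)))))"
    unfolding detS_def pr by (intro sum.cong refl) (simp add: sum_distrib_left sum_distrib_right mult_ac)
  also have "\<dots> = (\<Sum>k\<in>K. \<Sum>p | p permutes S. c k * (of_int (sign p) * (B k (p i0) * (\<Prod>i\<in>S-{i0}. A i (p i)))))"
    by (rule sum.swap)
  also have "\<dots> = (\<Sum>k\<in>K. c k * detS (A(i0 := B k)) S)"
    unfolding detS_def pr by (simp add: sum_distrib_left)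
  finally show ?thesis .
qed

lemma detS_zero_row:
  assumes S: "finite S" and i0: "i0 \<in> S" and z: "\<And>j. j \<in> S \<Longrightarrow> A i0 j = 0"
  shows "detS A S = 0"
  unfolding detS_def
proof (rule sum.neutral, safe)
  fix p assume p: "p permutes S"
  have "(\<Prod>i\<in>S. A i (p i)) = 0"
  proof (rule prod_zero[OF S])
    have "p i0 \<in> S" using permutes_in_image[OF p] i0 by simp
    hence "A i0 (p i0) = 0" by (rule z)
    thus "\<exists>i\<in>S. A i (p i) = 0" using i0 by blast
  qed
  thus "of_int (sign p) * (\<Prod>i\<in>S. A i (p i)) = 0" by simp
qed

lemma detS_row_dep:
  fixes A :: "'a \<Rightarrow> 'a \<Rightarrow> 'b::linordered_idom"
  assumes S: "finite S" and i0: "i0 \<in> S" and c: "c i0 \<noteq> 0"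
    and dep: "\<And>j. j \<in> S \<Longrightarrow> (\<Sum>i\<in>S. c i * A i j) = 0"
  shows "detS A S = 0"
proof -
  have "detS (A(i0 := (\<lambda>j. \<Sum>k\<in>S. c k * A k j))) S = (\<Sum>k\<in>S. c k * detS (A(i0 := A k)) S)"
    by (rule detS_row_linear[OF S S i0])
  also have "\<dots> = (\<Sum>k\<in>S. if k = i0 then c k * detS A S else 0)"
  proof (rule sum.cong[OF refl])
    fix k assume k: "k \<in> S"
    show "c k * detS (A(i0 := A k)) S = (if k = i0 then c k * detS A S else 0)"
    proof (cases "k = i0")
      case False
      have "detS (A(i0 := A k)) S = 0"
        by (rule detS_equal_rows[OF S i0 k]) (use False in simp_all)
      thus ?thesis using False by simp
    qed simp
  qed
  also have "\<dots> = c i0 * detS A S" using i0 S by (simp add: sum.delta)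
  finally have "c i0 * detS A S = detS (A(i0 := (\<lambda>j. \<Sum>k\<in>S. c k * A k j))) S" ..
  also have "\<dots> = 0" by (rule detS_zero_row[OF S i0]) (simp add: dep)
  finally show ?thesis using c by simp
qed

lemma detS_col_dep:
  fixes A :: "'a \<Rightarrow> 'a \<Rightarrow> 'b::linordered_idom"
  assumes S: "finite S" and i0: "i0 \<in> S" and c: "c i0 \<noteq> 0"
    and dep: "\<And>i. i \<in> S \<Longrightarrow> (\<Sum>j\<in>S. A i j * c j) = 0"
  shows "detS A S = 0"
proof -
  have d: "(\<Sum>i\<in>S. c i * A j i) = 0" if j: "j \<in> S" for j
  proof -
    have "(\<Sum>i\<in>S. A j i * c i) = 0" by (rule dep[OF j])
    thus ?thesis by (simp add: mult.commute)
  qed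
  have "detS (\<lambda>i j. A j i) S = 0"
    using detS_row_dep[of S i0 c "\<lambda>i j. A j i"] S i0 c d by blast
  with detS_transpose[OF S, of A] show ?thesis by argo
qed

lemma detS_uminus:
  "detS (\<lambda>i j. - A i j) S = (-1) ^ card S * detS A S"
  unfolding detS_def by (simp add: prod_uminus sum_distrib_left mult_ac)

lemma detS_permute_rows:
  assumes S: "finite S" and q: "q permutes S"
  shows "detS (\<lambda>i j. B (q i) j) S = of_int (sign q) * detS B S"
proof -
  have "detS (\<lambda>i j. B (q i) j) S = (\<Sum>p | p permutes S. of_int (sign (p \<circ> q)) * (\<Prod>i\<in>S. B (q i) ((p \<circ> q) i)))"
    unfolding detS_def by (rule sum_permutations_compose_right[OF q])
  also have "\<dots> = (\<Sum>p | p permutes S. of_int (sign q) * (of_int (sign p) * (\<Prod>i\<in>S. B i (p i))))"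
  proof (rule sum.cong[OF refl])
    fix p assume "p \<in> {p. p permutes S}"
    hence p: "p permutes S" by simp
    have "(\<Prod>i\<in>S. B (q i) ((p \<circ> q) i)) = (\<Prod>i\<in>S. B i (p i))"
      using prod.permute[OF q, of "\<lambda>i. B i (p i)"] by (simp add: o_def)
    moreover have "sign (p \<circ> q) = sign p * sign q"
      by (rule sign_compose[OF permutes_imp_permutation[OF S p] permutes_imp_permutation[OF S q]])
    ultimately show "of_int (sign (p \<circ> q)) * (\<Prod>i\<in>S. B (q i) ((p \<circ> q) i))
       = of_int (sign q) * (of_int (sign p) * (\<Prod>i\<in>S. B i (p i)))" by simp
  qed
  also have "\<dots> = of_int (sign q) * detS B S" unfolding detS_def by (simp add: sum_distrib_left)
  finally show ?thesis .
qed

lemma detS_mult_pre: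
  assumes S: "finite S" and K: "finite K"
  shows "detS (\<lambda>i j. \<Sum>k\<in>K. A i k * B k j) S
     = (\<Sum>g\<in>S \<rightarrow>\<^sub>E K. (\<Prod>i\<in>S. A i (g i)) * detS (\<lambda>i j. B (g i) j) S)"
proof -
  have "detS (\<lambda>i j. \<Sum>k\<in>K. A i k * B k j) S
     = (\<Sum>p | p permutes S. of_int (sign p) * (\<Sum>g\<in>S \<rightarrow>\<^sub>E K. \<Prod>i\<in>S. A i (g i) * B (g i) (p i)))"
    unfolding detS_def by (subst prod_sum_PiE[OF S]) (use K in auto)
  also have "\<dots> = (\<Sum>p | p permutes S. \<Sum>g\<in>S \<rightarrow>\<^sub>E K. (\<Prod>i\<in>S. A i (g i)) * (of_int (sign p) * (\<Prod>i\<in>S. B (g i) (p i))))"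
    by (intro sum.cong refl) (simp add: sum_distrib_left prod.distrib mult_ac)
  also have "\<dots> = (\<Sum>g\<in>S \<rightarrow>\<^sub>E K. \<Sum>p | p permutes S. (\<Prod>i\<in>S. A i (g i)) * (of_int (sign p) * (\<Prod>i\<in>S. B (g i) (p i))))"
    by (rule sum.swap)
  also have "\<dots> = (\<Sum>g\<in>S \<rightarrow>\<^sub>E K. (\<Prod>i\<in>S. A i (g i)) * detS (\<lambda>i j. B (g i) j) S)"
    unfolding detS_def by (simp add: sum_distrib_left)
  finally show ?thesis .
qed

lemma detS_noninj_rows:
  fixes B :: "'k \<Rightarrow> 'a \<Rightarrow> 'b::linordered_idom"
  assumes S: "finite S" and g: "\<not> inj_on g S"
  shows "detS (\<lambda>i j. B (g i) j) S = 0"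
proof -
  from g obtain i j where "i \<in> S" "j \<in> S" "i \<noteq> j" "g i = g j" by (auto simp: inj_on_def)
  thus ?thesis by (intro detS_equal_rows[OF S, of i j]) auto
qed

lemma detS_CB_bij:
  fixes A :: "'a \<Rightarrow> 'k \<Rightarrow> 'b::linordered_idom" and B :: "'k \<Rightarrow> 'a \<Rightarrow> 'b"
  assumes S: "finite S" and h: "bij_betw h S R"
  shows "(\<Sum>g \<in> {g \<in> S \<rightarrow>\<^sub>E R. inj_on g S}. (\<Prod>i\<in>S. A i (g i)) * detS (\<lambda>i j. B (g i) j) S)
         = detS (\<lambda>i j. A i (h j)) S * detS (\<lambda>i j. B (h i) j) S"
proof -
  have hinj: "inj_on h S" and hS: "h ` S = R" using h by (auto simp: bij_betw_def)
  have R: "finite R" using hS S by blast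
  have cardR: "card R = card S" using h by (simp add: bij_betw_same_card)
  define gq where "gq = (\<lambda>q x. if x \<in> S then h (q x) else undefined)"
  define qg where "qg = (\<lambda>g x. if x \<in> S then inv_into S h (g x) else x)"
  have img: "g ` S = R" if g: "g \<in> {g \<in> S \<rightarrow>\<^sub>E R. inj_on g S}" for g
  proof -
    have "g ` S \<subseteq> R" using g by auto
    moreover have "card (g ` S) = card R" using g cardR by (simp add: card_image)
    ultimately show ?thesis using R by (simp add: card_subset_eq)
  qed
  have "(\<Sum>q | q permutes S. (\<Prod>i\<in>S. A i (h (q i))) * (of_int (sign q) * detS (\<lambda>i j. B (h i) j) S))
     = (\<Sum>g \<in> {g \<in> S \<rightarrow>\<^sub>E R. inj_on g S}. (\<Prod>i\<in>S. A i (g i)) * detS (\<lambda>i j. B (g i) j) S)"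
  proof (rule sum.reindex_bij_witness[where i=qg and j=gq])
    fix q assume "q \<in> {q. q permutes S}"
    hence q: "q permutes S" by simp
    show "qg (gq q) = q"
    proof
      fix x show "qg (gq q) x = q x"
        using q hinj by (auto simp: qg_def gq_def permutes_in_image permutes_not_in)
    qed
    show "gq q \<in> {g \<in> S \<rightarrow>\<^sub>E R. inj_on g S}"
    proof -
      have "gq q \<in> S \<rightarrow>\<^sub>E R" using q hS by (auto simp: gq_def permutes_in_image)
      moreover have "inj_on (gq q) S"
      proof (rule inj_onI)
        fix x y assume "x \<in> S" "y \<in> S" "gq q x = gq q y"
        hence "h (q x) = h (q y)" "q x \<in> S" "q y \<in> S" using q by (auto simp: gq_def permutes_in_image)
        hence "q x = q y" using hinj by (auto dest: inj_onD)
        thus "x = y" using permutes_inj[OF q] by (auto dest: injD)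
      qed
      ultimately show ?thesis by simp
    qed
    have "detS (\<lambda>i j. B (gq q i) j) S = detS (\<lambda>i j. B (h (q i)) j) S"
      by (rule detS_cong) (simp add: gq_def)
    also have "\<dots> = of_int (sign q) * detS (\<lambda>i j. B (h i) j) S"
      by (rule detS_permute_rows[OF S q, of "\<lambda>i j. B (h i) j"])
    finally show "(\<Prod>i\<in>S. A i (gq q i)) * detS (\<lambda>i j. B (gq q i) j) S
        = (\<Prod>i\<in>S. A i (h (q i))) * (of_int (sign q) * detS (\<lambda>i j. B (h i) j) S)"
      by (simp add: gq_def)
  next
    fix g assume g: "g \<in> {g \<in> S \<rightarrow>\<^sub>E R. inj_on g S}"
    have gS: "g ` S = R" by (rule img[OF g])
    show "gq (qg g) = g"
    proof
      fix x show "gq (qg g) x = g x"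
      proof (cases "x \<in> S")
        case True
        hence "g x \<in> h ` S" using gS hS by auto
        thus ?thesis using True by (simp add: gq_def qg_def f_inv_into_f)
      next
        case False thus ?thesis using g by (auto simp: gq_def qg_def)
      qed
    qed
    show "qg g \<in> {q. q permutes S}"
    proof -
      have "bij_betw g S R" using g gS by (auto simp: bij_betw_def)
      moreover have "bij_betw (inv_into S h) R S" using bij_betw_inv_into[OF h] .
      ultimately have "bij_betw (inv_into S h \<circ> g) S S" by (rule bij_betw_trans)
      hence "bij_betw (qg g) S S" by (rule bij_betw_cong[THEN iffD1, rotated]) (simp add: qg_def)
      hence "qg g permutes S" by (rule bij_imp_permutes) (simp add: qg_def)
      thus ?thesis by simp
    qed
  qed
  hence "(\<Sum>g \<in> {g \<in> S \<rightarrow>\<^sub>E R. inj_on g S}. (\<Prod>i\<in>S. A i (g i)) * detS (\<lambda>i j. B (g i) j) S)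
      = (\<Sum>q | q permutes S. (\<Prod>i\<in>S. A i (h (q i))) * (of_int (sign q) * detS (\<lambda>i j. B (h i) j) S))" ..
  also have "\<dots> = (\<Sum>q | q permutes S. of_int (sign q) * (\<Prod>i\<in>S. A (inv_into UNIV q i) (h i))) * detS (\<lambda>i j. B (h i) j) S"
  proof -
    have pe: "(\<Prod>i\<in>S. A i (h (q i))) = (\<Prod>i\<in>S. A (inv_into UNIV q i) (h i))" if q: "q permutes S" for q
      using prod.permute[OF q, of "\<lambda>i. A (inv_into UNIV q i) (h i)"] by (simp add: o_def permutes_inverses(2)[OF q])
    have "(\<Sum>q | q permutes S. (\<Prod>i\<in>S. A i (h (q i))) * (of_int (sign q) * detS (\<lambda>i j. B (h i) j) S))
       = (\<Sum>q | q permutes S. (of_int (sign q) * (\<Prod>i\<in>S. A (inv_into UNIV q i) (h i))) * detS (\<lambda>i j. B (h i) j) S)"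
      by (rule sum.cong[OF refl]) (simp add: pe mult_ac)
    also have "\<dots> = (\<Sum>q | q permutes S. of_int (sign q) * (\<Prod>i\<in>S. A (inv_into UNIV q i) (h i))) * detS (\<lambda>i j. B (h i) j) S"
      by (rule sum_distrib_right[symmetric])
    finally show ?thesis .
  qed
  also have "(\<Sum>q | q permutes S. of_int (sign q) * (\<Prod>i\<in>S. A (inv_into UNIV q i) (h i)))
      = (\<Sum>q | q permutes S. of_int (sign (inv_into UNIV q)) * (\<Prod>i\<in>S. A (inv_into UNIV q i) (h i)))"
    by (rule sum.cong[OF refl]) (simp add: sign_inv_permutes[OF S])
  also have "\<dots> = (\<Sum>q | q permutes S. of_int (sign q) * (\<Prod>i\<in>S. A (q i) (h i)))"
    by (rule sum_permutations_inverse[symmetric])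
  also have "\<dots> = detS (\<lambda>i j. A j (h i)) S" by (simp add: detS_def)
  also have "\<dots> = detS (\<lambda>i j. A i (h j)) S" using detS_transpose[OF S, of "\<lambda>i j. A i (h j)"] by simp
  finally show ?thesis .
qed

lemma detS_mult_inj:
  fixes A :: "'a \<Rightarrow> 'k \<Rightarrow> 'b::linordered_idom" and B :: "'k \<Rightarrow> 'a \<Rightarrow> 'b"
  assumes S: "finite S" and K: "finite K"
  shows "detS (\<lambda>i j. \<Sum>k\<in>K. A i k * B k j) S
     = (\<Sum>g\<in>{g \<in> S \<rightarrow>\<^sub>E K. inj_on g S}. (\<Prod>i\<in>S. A i (g i)) * detS (\<lambda>i j. B (g i) j) S)"
proof -
  have "detS (\<lambda>i j. \<Sum>k\<in>K. A i k * B k j) S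
     = (\<Sum>g\<in>S \<rightarrow>\<^sub>E K. (\<Prod>i\<in>S. A i (g i)) * detS (\<lambda>i j. B (g i) j) S)"
    by (rule detS_mult_pre[OF S K])
  also have "\<dots> = (\<Sum>g\<in>{g \<in> S \<rightarrow>\<^sub>E K. inj_on g S}. (\<Prod>i\<in>S. A i (g i)) * detS (\<lambda>i j. B (g i) j) S)"
  proof (rule sum.mono_neutral_right)
    show "finite (S \<rightarrow>\<^sub>E K)" using S K by (simp add: finite_PiE)
    show "{g \<in> S \<rightarrow>\<^sub>E K. inj_on g S} \<subseteq> S \<rightarrow>\<^sub>E K" by blast
    show "\<forall>g\<in>(S \<rightarrow>\<^sub>E K) - {g \<in> S \<rightarrow>\<^sub>E K. inj_on g S}. (\<Prod>i\<in>S. A i (g i)) * detS (\<lambda>i j. B (g i) j) S = 0"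
    proof
      fix g assume "g \<in> (S \<rightarrow>\<^sub>E K) - {g \<in> S \<rightarrow>\<^sub>E K. inj_on g S}"
      hence "\<not> inj_on g S" by simp
      hence "detS (\<lambda>i j. B (g i) j) S = 0" using detS_noninj_rows[OF S, of g B] by blast
      thus "(\<Prod>i\<in>S. A i (g i)) * detS (\<lambda>i j. B (g i) j) S = 0" by simp
    qed
  qed
  finally show ?thesis .
qed

lemma detS_mult:
  fixes A B :: "'a \<Rightarrow> 'a \<Rightarrow> 'b::linordered_idom"
  assumes S: "finite S"
  shows "detS (\<lambda>i j. \<Sum>k\<in>S. A i k * B k j) S = detS A S * detS B S"
proof -
  have "detS (\<lambda>i j. \<Sum>k\<in>S. A i k * B k j) S
     = (\<Sum>g\<in>{g \<in> S \<rightarrow>\<^sub>E S. inj_on g S}. (\<Prod>i\<in>S. A i (g i)) * detS (\<lambda>i j. B (g i) j) S)"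
    by (rule detS_mult_inj[OF S S])
  also have "\<dots> = detS (\<lambda>i j. A i (id j)) S * detS (\<lambda>i j. B (id i) j) S"
    by (rule detS_CB_bij[OF S]) (simp add: bij_betw_def)
  finally show ?thesis by simp
qed

definition hb :: "'a set \<Rightarrow> 'k set \<Rightarrow> 'a \<Rightarrow> 'k" where
  "hb S R = (SOME h. bij_betw h S R)"

lemma hb_bij: "finite S \<Longrightarrow> finite R \<Longrightarrow> card R = card S \<Longrightarrow> bij_betw (hb S R) S R"
proof -
  assume a: "finite S" "finite R" "card R = card S"
  then obtain h where "bij_betw h S R" using finite_same_card_bij[of S R] by auto
  thus "bij_betw (hb S R) S R" unfolding hb_def by (rule someI[where P="\<lambda>h. bij_betw h S R"])
qed

lemma detS_CB:
  fixes A :: "'a \<Rightarrow> 'k \<Rightarrow> 'b::linordered_idom" and B :: "'k \<Rightarrow> 'a \<Rightarrow> 'b"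
  assumes S: "finite S" and K: "finite K"
  shows "detS (\<lambda>i j. \<Sum>k\<in>K. A i k * B k j) S
     = (\<Sum>R | R \<subseteq> K \<and> card R = card S. detS (\<lambda>i j. A i (hb S R j)) S * detS (\<lambda>i j. B (hb S R i) j) S)"
proof -
  let ?I = "{g \<in> S \<rightarrow>\<^sub>E K. inj_on g S}"
  let ?T = "{R. R \<subseteq> K \<and> card R = card S}"
  let ?F = "\<lambda>g. (\<Prod>i\<in>S. A i (g i)) * detS (\<lambda>i j. B (g i) j) S"
  have fI: "finite ?I" using S K by (auto simp: finite_PiE)
  have fT: "finite ?T" using K by (auto intro: finite_subset[of _ "Pow K"])
  have sub: "(\<lambda>g. g ` S) ` ?I \<subseteq> ?T" using S by (auto simp: card_image)
  have "detS (\<lambda>i j. \<Sum>k\<in>K. A i k * B k j) S = sum ?F ?I" by (rule detS_mult_inj[OF S K])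
  also have "\<dots> = (\<Sum>R\<in>?T. sum ?F {g \<in> ?I. g ` S = R})"
    by (rule sum.group[OF fI fT sub, symmetric])
  also have "\<dots> = (\<Sum>R\<in>?T. detS (\<lambda>i j. A i (hb S R j)) S * detS (\<lambda>i j. B (hb S R i) j) S)"
  proof (rule sum.cong[OF refl])
    fix R assume "R \<in> ?T"
    hence RK: "R \<subseteq> K" and cR: "card R = card S" by auto
    have fR: "finite R" using RK K by (rule finite_subset)
    have eq: "{g \<in> ?I. g ` S = R} = {g \<in> S \<rightarrow>\<^sub>E R. inj_on g S}"
    proof (intro equalityI subsetI)
      fix g assume "g \<in> {g \<in> ?I. g ` S = R}"
      thus "g \<in> {g \<in> S \<rightarrow>\<^sub>E R. inj_on g S}" by (auto simp: PiE_def)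
    next
      fix g assume g: "g \<in> {g \<in> S \<rightarrow>\<^sub>E R. inj_on g S}"
      hence "g ` S \<subseteq> R" "card (g ` S) = card R" using cR by (auto simp: card_image)
      hence "g ` S = R" using fR by (simp add: card_subset_eq)
      thus "g \<in> {g \<in> ?I. g ` S = R}" using g RK by (auto simp: PiE_def)
    qed
    show "sum ?F {g \<in> ?I. g ` S = R} = detS (\<lambda>i j. A i (hb S R j)) S * detS (\<lambda>i j. B (hb S R i) j) S"
      unfolding eq by (rule detS_CB_bij[OF S hb_bij[OF S fR cR]])
  qed
  finally show ?thesis .
qed

lemma permutes_restrict_fix:
  assumes "p permutes S" "T \<subseteq> S" "\<And>x. x \<in> S - T \<Longrightarrow> p x = x"
  shows "p permutes T"
  using assms unfolding permutes_def by blast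

lemma detS_diag_plus:
  fixes X :: "'a \<Rightarrow> 'a \<Rightarrow> 'b::comm_ring_1"
  assumes S: "finite S"
  shows "detS (\<lambda>i j. (if i = j then d i else 0) + X i j) S = (\<Sum>T\<in>Pow S. (\<Prod>i\<in>S-T. d i) * detS X T)"
proof -
  let ?D = "\<lambda>i j. if i = j then d i else 0"
  let ?F = "\<lambda>T p. of_int (sign p) * ((\<Prod>i\<in>T. X i (p i)) * (\<Prod>i\<in>S-T. ?D i (p i)))"
  have "detS (\<lambda>i j. ?D i j + X i j) S = (\<Sum>p | p permutes S. \<Sum>T\<in>Pow S. ?F T p)"
    unfolding detS_def
  proof (rule sum.cong[OF refl])
    fix p
    have "(\<Prod>i\<in>S. ?D i (p i) + X i (p i)) = (\<Prod>i\<in>S. X i (p i) + ?D i (p i))" by (simp add: add.commute)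
    also have "\<dots> = (\<Sum>T\<in>Pow S. (\<Prod>i\<in>T. X i (p i)) * (\<Prod>i\<in>S-T. ?D i (p i)))"
      by (rule prod_add[OF S])
    finally show "of_int (sign p) * (\<Prod>i\<in>S. ?D i (p i) + X i (p i)) = (\<Sum>T\<in>Pow S. ?F T p)"
      by (simp add: sum_distrib_left)
  qed
  also have "\<dots> = (\<Sum>T\<in>Pow S. \<Sum>p | p permutes S. ?F T p)" by (rule sum.swap)
  also have "\<dots> = (\<Sum>T\<in>Pow S. (\<Prod>i\<in>S-T. d i) * detS X T)"
  proof (rule sum.cong[OF refl])
    fix T assume "T \<in> Pow S"
    hence TS: "T \<subseteq> S" by simp
    have fT: "finite T" using TS S by (rule finite_subset)
    have "(\<Sum>p | p permutes S. ?F T p) = (\<Sum>p | p permutes T. ?F T p)"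
    proof (rule sum.mono_neutral_right)
      show "finite {p. p permutes S}" using S by (rule finite_permutations)
      show "{p. p permutes T} \<subseteq> {p. p permutes S}" using TS by (auto intro: permutes_subset)
      show "\<forall>p\<in>{p. p permutes S} - {p. p permutes T}. ?F T p = 0"
      proof
        fix p assume p: "p \<in> {p. p permutes S} - {p. p permutes T}"
        then obtain x where x: "x \<in> S - T" "p x \<noteq> x"
          using permutes_restrict_fix[OF _ TS, of p] by blast
        have "(\<Prod>i\<in>S-T. ?D i (p i)) = 0"
        proof (rule prod_zero)
          show "finite (S - T)" using S by simp
          show "\<exists>a\<in>S-T. ?D a (p a) = 0" by (rule bexI[of _ x]) (use x in auto)
        qed
        thus "?F T p = 0" by simp
      qed
    qed
    also have "\<dots> = (\<Sum>p | p permutes T. (\<Prod>i\<in>S-T. d i) * (of_int (sign p) * (\<Prod>i\<in>T. X i (p i))))"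
    proof (rule sum.cong[OF refl])
      fix p assume "p \<in> {p. p permutes T}"
      hence p: "p permutes T" by simp
      have "(\<Prod>i\<in>S-T. ?D i (p i)) = (\<Prod>i\<in>S-T. d i)"
        by (rule prod.cong[OF refl]) (simp add: permutes_not_in[OF p])
      thus "?F T p = (\<Prod>i\<in>S-T. d i) * (of_int (sign p) * (\<Prod>i\<in>T. X i (p i)))" by (simp add: mult_ac)
    qed
    also have "\<dots> = (\<Prod>i\<in>S-T. d i) * detS X T" by (simp add: detS_def sum_distrib_left)
    finally show "(\<Sum>p | p permutes S. ?F T p) = (\<Prod>i\<in>S-T. d i) * detS X T" .
  qed
  finally show ?thesis .
qed

lemma detS_unit_cols:
  fixes Q :: "'a \<Rightarrow> 'a \<Rightarrow> 'b::comm_ring_1"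
  assumes S: "finite S" and RS: "R \<subseteq> S"
    and unit: "\<And>i j. i \<in> S \<Longrightarrow> j \<in> S - R \<Longrightarrow> Q i j = (if i = j then 1 else 0)"
  shows "detS Q S = detS Q R"
proof -
  let ?F = "\<lambda>p. of_int (sign p) * (\<Prod>i\<in>S. Q i (p i))"
  have "detS Q S = (\<Sum>p | p permutes R. ?F p)"
    unfolding detS_def
  proof (rule sum.mono_neutral_right)
    show "finite {p. p permutes S}" using S by (rule finite_permutations)
    show "{p. p permutes R} \<subseteq> {p. p permutes S}" using RS by (auto intro: permutes_subset)
    show "\<forall>p\<in>{p. p permutes S} - {p. p permutes R}. ?F p = 0"
    proof
      fix p assume p: "p \<in> {p. p permutes S} - {p. p permutes R}"
      hence pS: "p permutes S" by simp
      obtain x where x: "x \<in> S - R" "p x \<noteq> x"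
        using permutes_restrict_fix[OF _ RS, of p] p by blast
      let ?i = "inv_into UNIV p x"
      have pi: "p ?i = x" by (rule permutes_inverses(1)[OF pS])
      have iS: "?i \<in> S" using permutes_in_image[OF permutes_inv[OF pS]] x by simp
      have "?i \<noteq> x" using pi x by auto
      hence "Q ?i (p ?i) = 0" using unit[OF iS] x pi by simp
      hence "(\<Prod>i\<in>S. Q i (p i)) = 0" using iS S by (intro prod_zero) auto
      thus "?F p = 0" by simp
    qed
  qed
  also have "\<dots> = detS Q R"
    unfolding detS_def
  proof (rule sum.cong[OF refl])
    fix p assume "p \<in> {p. p permutes R}"
    hence p: "p permutes R" by simp
    have "(\<Prod>i\<in>S. Q i (p i)) = (\<Prod>i\<in>R. Q i (p i)) * (\<Prod>i\<in>S-R. Q i (p i))"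
      using prod.subset_diff[OF RS S, of "\<lambda>i. Q i (p i)"] by (simp only: mult.commute)
    also have "(\<Prod>i\<in>S-R. Q i (p i)) = 1"
      by (rule prod.neutral) (use unit permutes_not_in[OF p] in auto)
    finally show "?F p = of_int (sign p) * (\<Prod>i\<in>R. Q i (p i))" by simp
  qed
  finally show ?thesis .
qed

lemma det_mat_detS: "det (mat n n (\<lambda>(i,j). f i j)) = detS f {0..<n}"
  unfolding det_def detS_def
  by (auto intro!: sum.cong prod.cong simp: permutes_in_image)

lemma det_list_detS:
  assumes "distinct xs"
  shows "det (mat (length xs) (length xs) (\<lambda>(i,j). F (xs!i) (xs!j))) = detS F (set xs)"
proof -
  have "det (mat (length xs) (length xs) (\<lambda>(i,j). F (xs!i) (xs!j))) = detS (\<lambda>i j. F (xs!i) (xs!j)) {0..<length xs}"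
    by (rule det_mat_detS)
  also have "\<dots> = detS F ((!) xs ` {0..<length xs})"
    by (rule detS_reindex) (use assms in \<open>auto simp: inj_on_nth\<close>)
  also have "(!) xs ` {0..<length xs} = set xs" by (auto simp: set_conv_nth)
  finally show ?thesis .
qed

definition inc :: "('e \<Rightarrow> 'v \<times> 'v) \<Rightarrow> 'v \<Rightarrow> 'e \<Rightarrow> int" where
  "inc ends v e = (if v = snd (ends e) then 1 else 0) - (if v = fst (ends e) then 1 else 0)"

definition chain :: "('e \<Rightarrow> 'v \<times> 'v) \<Rightarrow> 'v list \<Rightarrow> 'e list \<Rightarrow> 'e \<Rightarrow> int" where
  "chain ends vs es x = (\<Sum>i<length es. if es ! i = x then (if ends x = (vs ! i, vs ! Suc i) then 1 else -1) else 0)"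

definition walk :: "('e \<Rightarrow> 'v \<times> 'v) \<Rightarrow> 'e set \<Rightarrow> 'v list \<Rightarrow> 'e list \<Rightarrow> bool" where
  "walk ends F vs es \<longleftrightarrow> length vs = Suc (length es) \<and> set es \<subseteq> F \<and>
      (\<forall>i<length es. joins ends (es ! i) (vs ! i) (vs ! Suc i))"

definition spath :: "('e \<Rightarrow> 'v \<times> 'v) \<Rightarrow> 'e set \<Rightarrow> 'v list \<Rightarrow> 'e list \<Rightarrow> bool" where
  "spath ends F vs es \<longleftrightarrow> walk ends F vs es \<and> distinct vs"

lemma is_path_spath: "is_path ends F vs es a b \<longleftrightarrow> spath ends F vs es \<and> hd vs = a \<and> last vs = b"
  unfolding is_path_def spath_def walk_def by auto

lemma last_nth_len: "length vs = Suc n \<Longrightarrow> last vs = vs ! n"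
proof -
  assume a: "length vs = Suc n"
  hence "vs \<noteq> []" by auto
  thus ?thesis using a by (simp add: last_conv_nth)
qed

lemma hd_nth_len: "length vs = Suc n \<Longrightarrow> hd vs = vs ! 0"
proof -
  assume a: "length vs = Suc n"
  hence "vs \<noteq> []" by auto
  thus ?thesis by (simp add: hd_conv_nth)
qed

lemma joins_sym: "joins ends e a b \<longleftrightarrow> joins ends e b a"
  unfolding joins_def by auto

lemma joins_same: "joins ends e a b \<Longrightarrow> joins ends e c d \<Longrightarrow> (a = c \<and> b = d) \<or> (a = d \<and> b = c)"
  unfolding joins_def by auto

lemma joins_other: "joins ends e a b \<Longrightarrow> joins ends e a c \<Longrightarrow> b = c"
  unfolding joins_def by auto

lemma inc_trav:
  assumes "joins ends e a b"
  shows "inc ends v e * (if ends e = (a, b) then 1 else -1) = (if v = b then 1 else 0) - (if v = a then 1 else 0)"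
  using assms unfolding joins_def inc_def by (cases "ends e") auto

lemma telescope_walk:
  assumes w: "walk ends F vs es" and F: "finite F"
  shows "(\<Sum>x\<in>F. inc ends v x * chain ends vs es x) = (if v = last vs then 1 else 0) - (if v = hd vs then 1 else 0)"
proof -
  let ?s = "\<lambda>i x. (if ends x = (vs ! i, vs ! Suc i) then 1 else -1) :: int"
  have len: "length vs = Suc (length es)" and sub: "set es \<subseteq> F"
    and j: "\<And>i. i < length es \<Longrightarrow> joins ends (es ! i) (vs ! i) (vs ! Suc i)"
    using w unfolding walk_def by auto
  have "(\<Sum>x\<in>F. inc ends v x * chain ends vs es x)
      = (\<Sum>x\<in>F. \<Sum>i<length es. if es ! i = x then inc ends v x * ?s i x else 0)"
    unfolding chain_def sum_distrib_left by (intro sum.cong refl) auto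
  also have "\<dots> = (\<Sum>i<length es. \<Sum>x\<in>F. if es ! i = x then inc ends v x * ?s i x else 0)"
    by (rule sum.swap)
  also have "\<dots> = (\<Sum>i<length es. inc ends v (es ! i) * ?s i (es ! i))"
  proof (rule sum.cong[OF refl])
    fix i assume "i \<in> {..<length es}"
    hence "es ! i \<in> F" using sub by auto
    thus "(\<Sum>x\<in>F. if es ! i = x then inc ends v x * ?s i x else 0) = inc ends v (es ! i) * ?s i (es ! i)"
      using F by (simp add: sum.delta)
  qed
  also have "\<dots> = (\<Sum>i<length es. (\<lambda>k. if v = vs ! k then 1 else 0) (Suc i) - (\<lambda>k. if v = vs ! k then 1 else 0) i)"
  proof (rule sum.cong[OF refl])
    fix i assume "i \<in> {..<length es}"
    hence i: "i < length es" by simp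
    show "inc ends v (es ! i) * ?s i (es ! i) = (\<lambda>k. if v = vs ! k then 1 else 0) (Suc i) - (\<lambda>k. if v = vs ! k then 1 else 0) i"
      using inc_trav[OF j[OF i], of v] by simp
  qed
  also have "\<dots> = (if v = vs ! length es then 1 else 0) - (if v = vs ! 0 then 1 else 0)"
    by (rule sum_lessThan_telescope)
  also have "vs ! length es = last vs" using last_nth_len[OF len] by simp
  also have "vs ! 0 = hd vs" using hd_nth_len[OF len] by simp
  finally show ?thesis .
qed

lemma walk_mono: "walk ends F vs es \<Longrightarrow> F \<subseteq> F' \<Longrightarrow> walk ends F' vs es"
  unfolding walk_def by auto

lemma spath_distinct_edges:
  assumes p: "spath ends F vs es"
  shows "distinct es"
proof -
  have len: "length vs = Suc (length es)" and d: "distinct vs"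
    and j: "\<And>i. i < length es \<Longrightarrow> joins ends (es ! i) (vs ! i) (vs ! Suc i)"
    using p unfolding spath_def walk_def by auto
  show ?thesis
  proof (rule distinct_conv_nth[THEN iffD2], intro allI impI)
    fix i k assume ik: "i < length es" "k < length es" "i \<noteq> k"
    show "es ! i \<noteq> es ! k"
    proof
      assume eq: "es ! i = es ! k"
      have jk: "joins ends (es ! i) (vs ! k) (vs ! Suc k)" using j[OF ik(2)] eq by simp
      from joins_same[OF j[OF ik(1)] jk]
      have "(vs ! i = vs ! k \<and> vs ! Suc i = vs ! Suc k) \<or> (vs ! i = vs ! Suc k \<and> vs ! Suc i = vs ! k)" .
      moreover have "vs ! i \<noteq> vs ! k" using d ik len by (simp add: nth_eq_iff_index_eq)
      moreover have "vs ! i = vs ! Suc k \<Longrightarrow> vs ! Suc i = vs ! k \<Longrightarrow> False"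
      proof -
        assume a: "vs ! i = vs ! Suc k" "vs ! Suc i = vs ! k"
        have "i = Suc k" using a(1) d ik len by (simp add: nth_eq_iff_index_eq)
        moreover have "Suc i = k" using a(2) d ik len by (simp add: nth_eq_iff_index_eq)
        ultimately show False by simp
      qed
      ultimately show False by blast
    qed
  qed
qed

lemma spath_tail:
  assumes "spath ends F (a # vs) (e # es)"
  shows "spath ends F vs es" "joins ends e a (hd vs)" "e \<in> F" "a \<notin> set vs" "vs \<noteq> []"
proof -
  have len: "length vs = Suc (length es)" using assms unfolding spath_def walk_def by auto
  thus "vs \<noteq> []" by auto
  have j: "\<And>i. i < Suc (length es) \<Longrightarrow> joins ends ((e # es) ! i) ((a # vs) ! i) ((a # vs) ! Suc i)"
    using assms unfolding spath_def walk_def by auto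
  show "spath ends F vs es" using assms j[of "Suc _"] unfolding spath_def walk_def by auto
  have ne: "vs \<noteq> []" using len by auto
  show "joins ends e a (hd vs)" using j[of 0] len by (simp add: hd_conv_nth[OF ne])
  show "e \<in> F" "a \<notin> set vs" using assms unfolding spath_def walk_def by auto
qed

lemma spath_Cons:
  assumes "spath ends F vs es" "joins ends e a (hd vs)" "e \<in> F" "a \<notin> set vs"
  shows "spath ends F (a # vs) (e # es)"
proof -
  have len: "length vs = Suc (length es)" using assms unfolding spath_def walk_def by auto
  have ne: "vs \<noteq> []" using len by auto
  have "joins ends ((e # es) ! i) ((a # vs) ! i) ((a # vs) ! Suc i)" if "i < Suc (length es)" for i
  proof (cases i)
    case 0 thus ?thesis using assms(2) len by (simp add: hd_conv_nth[OF ne])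
  next
    case (Suc k) thus ?thesis using assms(1) that unfolding spath_def walk_def by auto
  qed
  thus ?thesis using assms len unfolding spath_def walk_def by auto
qed

lemma spath_unique_edges:
  assumes "spath ends F vs1 es1" "spath ends F vs2 es2" "hd vs1 = hd vs2" "set es1 = set es2"
  shows "vs1 = vs2 \<and> es1 = es2"
  using assms
proof (induction es1 arbitrary: vs1 vs2 es2)
  case Nil
  hence "es2 = []" by simp
  with Nil show ?case unfolding spath_def walk_def by (cases vs1; cases vs2) auto
next
  case (Cons e es1)
  obtain a vs1' where v1: "vs1 = a # vs1'" using Cons.prems(1) unfolding spath_def walk_def by (cases vs1) auto
  obtain e2 es2' where e2: "es2 = e2 # es2'" using Cons.prems(4) by (cases es2) auto
  obtain a2 vs2' where v2: "vs2 = a2 # vs2'" using Cons.prems(2) unfolding spath_def walk_def by (cases vs2) auto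
  have a2: "a2 = a" using Cons.prems(3) v1 v2 by simp
  note t1 = spath_tail[OF Cons.prems(1)[unfolded v1]]
  note t2 = spath_tail[OF Cons.prems(2)[unfolded v2 e2 a2]]
  have p1: "spath ends F vs1 (e # es1)" using Cons.prems(1) .
  have len1: "length vs1' = Suc (length es1)" using t1(1) unfolding spath_def walk_def by simp
  have "e2 = e"
  proof (rule ccontr)
    assume ne: "e2 \<noteq> e"
    hence "e2 \<in> set es1" using Cons.prems(4) e2 by auto
    then obtain i where i: "i < length es1" "es1 ! i = e2" by (auto simp: in_set_conv_nth)
    have "joins ends e2 (vs1' ! i) (vs1' ! Suc i)"
      using t1(1) i unfolding spath_def walk_def by auto
    from joins_same[OF t2(2) this]
    have "a = vs1' ! i \<or> a = vs1' ! Suc i" by blast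
    moreover have "vs1' ! i \<in> set vs1'" "vs1' ! Suc i \<in> set vs1'" using i len1 by auto
    ultimately show False using t1(4) by auto
  qed
  have "hd vs2' = hd vs1'" using joins_other[OF t2(2)[unfolded \<open>e2 = e\<close>] t1(2)] .
  moreover have "set es1 = set es2'"
  proof -
    have "distinct (e # es1)" using spath_distinct_edges[OF p1] .
    moreover have "distinct (e # es2')" using spath_distinct_edges[OF Cons.prems(2)] e2 \<open>e2 = e\<close> by simp
    ultimately show ?thesis using Cons.prems(4) e2 \<open>e2 = e\<close> by auto
  qed
  ultimately have "vs1' = vs2' \<and> es1 = es2'" using Cons.IH[OF t1(1) t2(1)] by simp
  thus ?case using v1 v2 a2 e2 \<open>e2 = e\<close> by simp
qed

lemma path_exists:
  assumes "(a, b) \<in> (adj_rel ends F)\<^sup>*"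
  shows "\<exists>vs es. spath ends F vs es \<and> hd vs = a \<and> last vs = b"
  using assms
proof (induction rule: rtrancl_induct)
  case base
  show ?case by (rule exI[of _ "[a]"], rule exI[of _ "[]"]) (simp add: spath_def walk_def)
next
  case (step v w)
  then obtain vs es where p: "spath ends F vs es" "hd vs = a" "last vs = v" by blast
  from step.hyps(2) obtain e where e: "e \<in> F" "joins ends e v w" by (auto simp: adj_rel_def)
  have len: "length vs = Suc (length es)" and d: "distinct vs" and sub: "set es \<subseteq> F"
    and j: "\<And>i. i < length es \<Longrightarrow> joins ends (es ! i) (vs ! i) (vs ! Suc i)"
    using p(1) unfolding spath_def walk_def by auto
  show ?case
  proof (cases "w \<in> set vs")
    case True
    then obtain k where k: "k < length vs" "vs ! k = w" by (auto simp: in_set_conv_nth)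
    let ?vs = "take (Suc k) vs" and ?es = "take k es"
    have "spath ends F ?vs ?es"
      unfolding spath_def walk_def using len d sub j k
      by (auto simp: min_def dest: in_set_takeD)
    moreover have "hd ?vs = a" using p(2) len by (simp add: hd_conv_nth)
    moreover have "last ?vs = w" using k by (simp add: take_Suc_conv_app_nth[OF k(1)])
    ultimately show ?thesis by blast
  next
    case False
    let ?vs = "vs @ [w]" and ?es = "es @ [e]"
    have "joins ends (?es ! i) (?vs ! i) (?vs ! Suc i)" if "i < length ?es" for i
    proof (cases "i < length es")
      case True thus ?thesis using j[OF True] len by (auto simp: nth_append)
    next
      case False
      hence "i = length es" using that by simp
      moreover have "last vs = vs ! length es" using last_nth_len[OF len] .
      ultimately show ?thesis using e(2) p(3) len by (auto simp: nth_append)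
    qed
    hence "spath ends F ?vs ?es" using len d sub False e(1) unfolding spath_def walk_def by auto
    moreover have "hd ?vs = a" using p(2) len by (cases vs) auto
    ultimately show ?thesis by auto
  qed
qed

lemma walk_verts:
  assumes w: "walk ends F vs es" and ne: "es \<noteq> []" and FV: "\<forall>e\<in>F. fst (ends e) \<in> V \<and> snd (ends e) \<in> V"
  shows "set vs \<subseteq> V"
proof
  fix v assume "v \<in> set vs"
  then obtain i where i: "i < length vs" "vs ! i = v" by (auto simp: in_set_conv_nth)
  have len: "length vs = Suc (length es)" and sub: "set es \<subseteq> F"
    and j: "\<And>i. i < length es \<Longrightarrow> joins ends (es ! i) (vs ! i) (vs ! Suc i)"
    using w unfolding walk_def by auto
  show "v \<in> V"
  proof (cases "i < length es")
    case True
    have "es ! i \<in> F" using sub True by auto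
    thus ?thesis using j[OF True] FV i(2) unfolding joins_def by (cases "ends (es ! i)") auto
  next
    case False
    hence ii: "i = Suc (length es - 1)" "length es - 1 < length es" using i len ne by auto
    have "es ! (length es - 1) \<in> F" using sub ii by auto
    thus ?thesis using j[OF ii(2)] FV i(2) ii(1) unfolding joins_def
      by (cases "ends (es ! (length es - 1))") auto
  qed
qed

lemma cycle_from_path:
  assumes p: "spath ends F vs es" and k: "k < length vs" "0 < k" and e: "e \<in> F" "e \<notin> set es"
    and j: "joins ends e (vs ! k) (hd vs)"
  shows "has_cycle ends F"
proof -
  have len: "length vs = Suc (length es)" and d: "distinct vs" and sub: "set es \<subseteq> F"
    and jj: "\<And>i. i < length es \<Longrightarrow> joins ends (es ! i) (vs ! i) (vs ! Suc i)"
    using p unfolding spath_def walk_def by auto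
  have de: "distinct es" by (rule spath_distinct_edges[OF p])
  have kle: "k \<le> length es" using k len by simp
  let ?cv = "take (Suc k) vs @ [hd vs]" and ?ce = "take k es @ [e]"
  have "?ce \<noteq> [] \<and> distinct ?ce \<and> set ?ce \<subseteq> F \<and> length ?cv = Suc (length ?ce) \<and> hd ?cv = last ?cv \<and>
        distinct (butlast ?cv) \<and> (\<forall>i<length ?ce. joins ends (?ce ! i) (?cv ! i) (?cv ! Suc i))"
  proof (intro conjI allI impI)
    show "?ce \<noteq> []" by simp
    show "distinct ?ce" using de e(2) by (auto dest: in_set_takeD)
    show "set ?ce \<subseteq> F" using sub e(1) by (auto dest: in_set_takeD)
    show "length ?cv = Suc (length ?ce)" using kle k by (simp add: min_def)
    show "hd ?cv = last ?cv" using len by (cases vs) auto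
    show "distinct (butlast ?cv)" using d by simp
    fix i assume i: "i < length ?ce"
    hence i': "i \<le> k" using kle by (auto simp: min_def split: if_splits)
    show "joins ends (?ce ! i) (?cv ! i) (?cv ! Suc i)"
    proof (cases "i < k")
      case True
      thus ?thesis using jj[of i] kle k by (auto simp: nth_append min_def)
    next
      case False
      hence "i = k" using i' by simp
      thus ?thesis using j kle k by (auto simp: nth_append min_def)
    qed
  qed
  thus ?thesis unfolding has_cycle_def by blast
qed

lemma loop_cycle:
  assumes "e \<in> F" "fst (ends e) = snd (ends e)"
  shows "has_cycle ends F"
proof -
  let ?a = "fst (ends e)"
  have "[e] \<noteq> [] \<and> distinct [e] \<and> set [e] \<subseteq> F \<and> length [?a, ?a] = Suc (length [e]) \<and>
        hd [?a, ?a] = last [?a, ?a] \<and> distinct (butlast [?a, ?a]) \<and>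
        (\<forall>i<length [e]. joins ends ([e] ! i) ([?a, ?a] ! i) ([?a, ?a] ! Suc i))"
    using assms by (auto simp: joins_def prod_eq_iff)
  thus ?thesis unfolding has_cycle_def by blast
qed

lemma has_cycle_mono: "has_cycle ends F \<Longrightarrow> F \<subseteq> F' \<Longrightarrow> has_cycle ends F'"
  unfolding has_cycle_def by blast

lemma acyclic_card:
  assumes "finite V" "finite F" "\<forall>e\<in>F. fst (ends e) \<in> V \<and> snd (ends e) \<in> V" "\<not> has_cycle ends F" "V \<noteq> {}"
  shows "card F < card V"
  using assms
proof (induction "card F" arbitrary: F V rule: less_induct)
  case less
  note finV = less.prems(1) and finF = less.prems(2) and FV = less.prems(3) and ac = less.prems(4)
  show ?case
  proof (cases "F = {}")
    case True thus ?thesis using less.prems by (simp add: card_gt_0_iff)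
  next
    case False
    then obtain e0 where e0: "e0 \<in> F" by blast
    obtain a b where ab: "ends e0 = (a, b)" by (cases "ends e0")
    have "a \<noteq> b" using loop_cycle[of e0 F ends] e0 ab ac by auto
    hence p0: "spath ends F [a, b] [e0]"
      using e0 ab unfolding spath_def walk_def joins_def by auto
    let ?P = "\<lambda>p. spath ends F (fst p) (snd p) \<and> snd p \<noteq> []"
    have bound: "\<forall>p. ?P p \<longrightarrow> length (snd p) < card V"
    proof (intro allI impI)
      fix p assume Pp: "?P p"
      have "set (fst p) \<subseteq> V" using walk_verts[of ends F "fst p" "snd p" V] Pp FV unfolding spath_def by auto
      hence "card (set (fst p)) \<le> card V" using finV by (rule card_mono[rotated])
      moreover have "card (set (fst p)) = length (fst p)" using Pp unfolding spath_def by (simp add: distinct_card)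
      moreover have "length (fst p) = Suc (length (snd p))" using Pp unfolding spath_def walk_def by simp
      ultimately show "length (snd p) < card V" by simp
    qed
    obtain p where pP: "?P p" and pmax: "\<forall>q. ?P q \<longrightarrow> length (snd q) \<le> length (snd p)"
      using ex_has_greatest_nat[of ?P "([a, b], [e0])" "\<lambda>p. length (snd p)" "card V"] p0 bound by auto
    obtain vs es where pe: "p = (vs, es)" by (cases p)
    have sp: "spath ends F vs es" and esne: "es \<noteq> []" using pP pe by auto
    obtain e1 es' where es: "es = e1 # es'" using esne by (cases es) auto
    obtain a0 vs' where vs: "vs = a0 # vs'" using sp unfolding spath_def walk_def by (cases vs) auto
    note t = spath_tail[OF sp[unfolded vs es]]
    have len: "length vs = Suc (length es)" and d: "distinct vs"
      and jj: "\<And>i. i < length es \<Longrightarrow> joins ends (es ! i) (vs ! i) (vs ! Suc i)"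
      using sp unfolding spath_def walk_def by auto
    have only: "e = e1" if e: "e \<in> F" "fst (ends e) = a0 \<or> snd (ends e) = a0" for e
    proof (rule ccontr)
      assume ne: "e \<noteq> e1"
      define w where "w = (if fst (ends e) = a0 then snd (ends e) else fst (ends e))"
      have jw: "joins ends e a0 w" using e(2) unfolding w_def joins_def by (cases "ends e") auto
      have notin: "e \<notin> set es"
      proof
        assume "e \<in> set es"
        then obtain i where i: "i < length es" "es ! i = e" by (auto simp: in_set_conv_nth)
        from joins_same[OF jw jj[OF i(1), unfolded i(2)]]
        have "a0 = vs ! i \<or> a0 = vs ! Suc i" by blast
        moreover have "a0 = vs ! 0" using vs by simp
        ultimately have "i = 0"
          using d len i(1) by (auto simp: nth_eq_iff_index_eq)
        thus False using i(2) es ne by simp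
      qed
      show False
      proof (cases "w \<in> set vs")
        case False
        have "spath ends F (w # vs) (e # es)"
          by (rule spath_Cons[OF sp]) (use jw vs e(1) False in \<open>auto simp: joins_sym\<close>)
        hence "?P (w # vs, e # es)" by simp
        with pmax pe show False by fastforce
      next
        case True
        then obtain k where k: "k < length vs" "vs ! k = w" by (auto simp: in_set_conv_nth)
        show False
        proof (cases "k = 0")
          case True
          hence "w = a0" using k vs by simp
          hence "fst (ends e) = snd (ends e)" using jw unfolding joins_def by auto
          thus False using loop_cycle[OF e(1)] ac by blast
        next
          case False
          have "joins ends e (vs ! k) (hd vs)" using jw k vs by (simp add: joins_sym)
          hence "has_cycle ends F" using cycle_from_path[OF sp k(1) _ e(1) notin] False by simp
          thus False using ac by blast
        qed
      qed
    qed
    have e1F: "e1 \<in> F" using t(3) .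
    have a0V: "a0 \<in> V" using walk_verts[of ends F vs es V] sp esne FV vs unfolding spath_def by auto
    let ?F = "F - {e1}" and ?V = "V - {a0}"
    have c1: "card ?F < card F" using e1F finF by (rule card_Diff1_less[rotated])
    have FV': "\<forall>e\<in>?F. fst (ends e) \<in> ?V \<and> snd (ends e) \<in> ?V" using FV only by auto
    have ac': "\<not> has_cycle ends ?F" using ac has_cycle_mono[of ends ?F F] by blast
    have "hd vs' \<in> ?V"
    proof -
      have "hd vs' \<in> set vs" using t(5) vs by simp
      moreover have "set vs \<subseteq> V" using walk_verts[of ends F vs es V] sp esne FV unfolding spath_def by auto
      moreover have "hd vs' \<noteq> a0" using t(4) t(5) by auto
      ultimately show ?thesis by auto
    qed
    hence "?V \<noteq> {}" by blast
    from less.hyps[OF c1 _ _ FV' ac' this] finV finF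
    have "card ?F < card ?V" by auto
    thus ?thesis using e1F a0V finF finV by (simp add: card_Diff_singleton)
  qed
qed

definition pth :: "('e \<Rightarrow> 'v \<times> 'v) \<Rightarrow> 'e set \<Rightarrow> 'v \<Rightarrow> 'v \<Rightarrow> 'v list \<times> 'e list" where
  "pth ends F a b = (SOME p. spath ends F (fst p) (snd p) \<and> hd (fst p) = a \<and> last (fst p) = b)"

lemma pth_spec:
  assumes "(a, b) \<in> (adj_rel ends F)\<^sup>*"
  shows "spath ends F (fst (pth ends F a b)) (snd (pth ends F a b)) \<and> hd (fst (pth ends F a b)) = a \<and> last (fst (pth ends F a b)) = b"
proof -
  obtain vs es where "spath ends F vs es \<and> hd vs = a \<and> last vs = b" using path_exists[OF assms] by blast
  hence "\<exists>p. spath ends F (fst p) (snd p) \<and> hd (fst p) = a \<and> last (fst p) = b" by (intro exI[of _ "(vs, es)"]) simp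
  thus ?thesis unfolding pth_def by (rule someI_ex)
qed

definition pchain :: "('e \<Rightarrow> 'v \<times> 'v) \<Rightarrow> 'e set \<Rightarrow> 'v \<Rightarrow> 'v \<Rightarrow> 'e \<Rightarrow> int" where
  "pchain ends F a b = chain ends (fst (pth ends F a b)) (snd (pth ends F a b))"

lemma pchain_bd:
  assumes "(a, b) \<in> (adj_rel ends F)\<^sup>*" "finite F"
  shows "(\<Sum>x\<in>F. inc ends v x * pchain ends F a b x) = (if v = b then 1 else 0) - (if v = a then 1 else 0)"
  using telescope_walk[of ends F "fst (pth ends F a b)" "snd (pth ends F a b)" v] pth_spec[OF assms(1)] assms(2)
  unfolding pchain_def spath_def by auto

lemma detS_id:
  fixes S :: "'a set"
  shows "finite S \<Longrightarrow> detS (\<lambda>i j. if i = j then (1::'b::comm_ring_1) else 0) S = 1"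
proof -
  assume S: "finite S"
  let ?Q = "\<lambda>(i::'a) j. if i = j then (1::'b) else 0"
  have "detS ?Q S = detS ?Q {}"
    by (rule detS_unit_cols[OF S]) auto
  also have "\<dots> = 1" by (simp add: detS_def permutes_empty)
  finally show ?thesis .
qed

lemma connected_card:
  assumes finV: "finite V" and finF: "finite F" and con: "connected_on V ends F" and r: "r \<in> V"
  shows "card V \<le> Suc (card F)"
proof (rule ccontr)
  assume "\<not> card V \<le> Suc (card F)"
  hence lt: "card F < card (V - {r})" using r finV by (simp add: card_Diff_singleton)
  let ?W = "V - {r}"
  have fW: "finite ?W" using finV by simp
  let ?C = "\<lambda>x w. pchain ends F r w x"
  have "detS (\<lambda>u w. \<Sum>x\<in>F. inc ends u x * ?C x w) ?W = detS (\<lambda>u w. if u = w then 1 else 0) ?W"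
  proof (rule detS_cong)
    fix u w assume u: "u \<in> ?W" and w: "w \<in> ?W"
    have "(r, w) \<in> (adj_rel ends F)\<^sup>*" using con r w unfolding connected_on_def by auto
    from pchain_bd[OF this finF, of u] u
    show "(\<Sum>x\<in>F. inc ends u x * ?C x w) = (if u = w then 1 else 0)" by auto
  qed
  also have "\<dots> = 1" by (rule detS_id[OF fW])
  finally have one: "detS (\<lambda>u w. \<Sum>x\<in>F. inc ends u x * ?C x w) ?W = 1" .
  have empty: "{g \<in> ?W \<rightarrow>\<^sub>E F. inj_on g ?W} = {}"
  proof (rule ccontr)
    assume "{g \<in> ?W \<rightarrow>\<^sub>E F. inj_on g ?W} \<noteq> {}"
    then obtain g where g: "g \<in> ?W \<rightarrow>\<^sub>E F" "inj_on g ?W" by blast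
    have "card ?W \<le> card F" by (rule card_inj_on_le[OF g(2) _ finF]) (use g(1) in auto)
    thus False using lt by simp
  qed
  have "detS (\<lambda>u w. \<Sum>x\<in>F. inc ends u x * ?C x w) ?W = 0"
    by (subst detS_mult_inj[OF fW finF]) (simp add: empty)
  with one show False by simp
qed

lemma spanning_tree_card:
  assumes finV: "finite V" and Vne: "V \<noteq> {}" and finE: "finite E"
    and EV: "\<forall>e\<in>E. fst (ends e) \<in> V \<and> snd (ends e) \<in> V"
    and T: "spanning_tree V E ends T"
  shows "Suc (card T) = card V"
proof -
  have TE: "T \<subseteq> E" and con: "connected_on V ends T" and ac: "\<not> has_cycle ends T"
    using T unfolding spanning_tree_def by auto
  have finT: "finite T" using TE finE by (rule finite_subset)
  have "card T < card V" by (rule acyclic_card[OF finV finT _ ac Vne]) (use EV TE in auto)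
  moreover obtain r where "r \<in> V" using Vne by blast
  hence "card V \<le> Suc (card T)" by (rule connected_card[OF finV finT con])
  ultimately show ?thesis by simp
qed

lemma chain_at:
  assumes d: "distinct es" and i: "i < length es"
  shows "chain ends vs es (es ! i) = (if ends (es ! i) = (vs ! i, vs ! Suc i) then 1 else -1)"
proof -
  have "chain ends vs es (es ! i) = (\<Sum>k<length es. if k = i then (if ends (es ! i) = (vs ! i, vs ! Suc i) then 1 else -1) else 0)"
    unfolding chain_def
    by (rule sum.cong[OF refl]) (use d i in \<open>auto simp: nth_eq_iff_index_eq\<close>)
  also have "\<dots> = (if ends (es ! i) = (vs ! i, vs ! Suc i) then 1 else -1)" using i by simp
  finally show ?thesis .
qed

lemma chain_notin: "x \<notin> set es \<Longrightarrow> chain ends vs es x = 0"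
  unfolding chain_def by (rule sum.neutral) auto

lemma chain_nz_iff:
  assumes "distinct es"
  shows "chain ends vs es x \<noteq> 0 \<longleftrightarrow> x \<in> set es"
proof
  assume "chain ends vs es x \<noteq> 0" thus "x \<in> set es" using chain_notin by metis
next
  assume "x \<in> set es"
  then obtain i where "i < length es" "es ! i = x" by (auto simp: in_set_conv_nth)
  thus "chain ends vs es x \<noteq> 0" using chain_at[OF assms, of i ends vs] by auto
qed

lemma adj_sym: "sym (adj_rel ends F)"
  unfolding sym_def adj_rel_def joins_def by auto

lemma adj_rtrancl_sym: "(a, b) \<in> (adj_rel ends F)\<^sup>* \<Longrightarrow> (b, a) \<in> (adj_rel ends F)\<^sup>*"
  by (rule symD[OF sym_rtrancl[OF adj_sym]])

lemma sum_delta_pred: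
  assumes "finite V" "b \<in> V"
  shows "(\<Sum>v\<in>V. if v = b \<and> P v then (1::int) else 0) = (if P b then 1 else 0)"
proof -
  have "(\<Sum>v\<in>V. if v = b \<and> P v then (1::int) else 0) = (\<Sum>v\<in>V. if v = b then (if P b then 1 else 0) else 0)"
    by (rule sum.cong) auto
  also have "\<dots> = (if P b then 1 else 0)" using assms by (simp add: sum.delta)
  finally show ?thesis .
qed

locale setting =
  fixes V :: "'v set" and E :: "'e set" and ends :: "'e \<Rightarrow> 'v \<times> 'v" and T0 :: "'e set" and r :: 'v
  assumes finV: "finite V" and finE: "finite E"
    and EV: "\<forall>e\<in>E. fst (ends e) \<in> V \<and> snd (ends e) \<in> V"
    and T0: "spanning_tree V E ends T0"
    and r: "r \<in> V"
begin

definition "W = V - {r}"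
definition "rho = hb T0 W"

lemma T0E: "T0 \<subseteq> E" using T0 unfolding spanning_tree_def by auto
lemma finT0: "finite T0" using T0E finE by (rule finite_subset)
lemma finW: "finite W" using finV unfolding W_def by simp
lemma T0con: "connected_on V ends T0" using T0 unfolding spanning_tree_def by auto

lemma card_T0: "card T0 = card W"
proof -
  have "Suc (card T0) = card V" by (rule spanning_tree_card[OF finV _ finE EV T0]) (use r in auto)
  thus ?thesis unfolding W_def using r finV by (simp add: card_Diff_singleton)
qed

lemma rho_bij: "bij_betw rho T0 W"
  unfolding rho_def by (rule hb_bij[OF finT0 finW card_T0[symmetric]])

lemma rho_in: "f \<in> T0 \<Longrightarrow> rho f \<in> W" using rho_bij by (auto simp: bij_betw_def)
lemma rho_inj: "f \<in> T0 \<Longrightarrow> g \<in> T0 \<Longrightarrow> rho f = rho g \<longleftrightarrow> f = g"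
  using rho_bij by (auto simp: bij_betw_def inj_on_def)

definition M :: "('e \<Rightarrow> 'e) \<Rightarrow> 'e \<Rightarrow> 'e \<Rightarrow> int" where
  "M \<phi> f f' = inc ends (rho f) (\<phi> f')"

lemma sum_phi:
  assumes "bij_betw \<phi> T0 F"
  shows "(\<Sum>f'\<in>T0. g (\<phi> f')) = (\<Sum>x\<in>F. g x)"
  using sum.reindex_bij_betw[OF assms, of g] by simp

lemma det_M_connected:
  assumes phi: "bij_betw \<phi> T0 F" and con: "connected_on V ends F"
  shows "detS (M \<phi>) T0 * detS (M \<phi>) T0 = 1"
proof -
  have finF: "finite F" using phi finT0 bij_betw_finite by blast
  let ?C = "\<lambda>f' f. pchain ends F r (rho f) (\<phi> f')"
  have "detS (\<lambda>i j. \<Sum>k\<in>T0. M \<phi> i k * ?C k j) T0 = detS (\<lambda>i j. if i = j then 1 else 0) T0"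
  proof (rule detS_cong)
    fix f1 f2 assume f1: "f1 \<in> T0" and f2: "f2 \<in> T0"
    have "(\<Sum>k\<in>T0. M \<phi> f1 k * ?C k f2) = (\<Sum>x\<in>F. inc ends (rho f1) x * pchain ends F r (rho f2) x)"
      unfolding M_def by (rule sum_phi[OF phi])
    also have "\<dots> = (if rho f1 = rho f2 then 1 else 0) - (if rho f1 = r then 1 else 0)"
    proof (rule pchain_bd[OF _ finF])
      show "(r, rho f2) \<in> (adj_rel ends F)\<^sup>*" using con r rho_in[OF f2] unfolding connected_on_def W_def by auto
    qed
    also have "\<dots> = (if f1 = f2 then 1 else 0)" using rho_in[OF f1] rho_inj[OF f1 f2] unfolding W_def by auto
    finally show "(\<Sum>k\<in>T0. M \<phi> f1 k * ?C k f2) = (if f1 = f2 then 1 else 0)" .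
  qed
  also have "\<dots> = 1" by (rule detS_id[OF finT0])
  finally have "detS (M \<phi>) T0 * detS ?C T0 = 1" using detS_mult[OF finT0, of "M \<phi>" ?C] by simp
  hence "detS (M \<phi>) T0 = 1 \<or> detS (M \<phi>) T0 = -1" by (auto simp: zmult_eq_1_iff)
  thus ?thesis by auto
qed

lemma det_M_cycle:
  assumes phi: "bij_betw \<phi> T0 F" and cyc: "has_cycle ends F"
  shows "detS (M \<phi>) T0 = 0"
proof -
  have finF: "finite F" using phi finT0 bij_betw_finite by blast
  from cyc obtain vs es where ne: "es \<noteq> []" and d: "distinct es" and sub: "set es \<subseteq> F"
    and len: "length vs = Suc (length es)" and hl: "hd vs = last vs"
    and j: "\<forall>i<length es. joins ends (es ! i) (vs ! i) (vs ! Suc i)"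
    unfolding has_cycle_def by blast
  have w: "walk ends F vs es" unfolding walk_def using len sub j by auto
  let ?c = "\<lambda>f'. chain ends vs es (\<phi> f')"
  have e0F: "es ! 0 \<in> F" using sub ne by (auto simp: hd_conv_nth[symmetric])
  let ?i0 = "inv_into T0 \<phi> (es ! 0)"
  have i0: "?i0 \<in> T0" using e0F phi by (auto simp: bij_betw_def inv_into_into)
  have pi0: "\<phi> ?i0 = es ! 0" using e0F phi by (auto simp: bij_betw_def f_inv_into_f)
  show ?thesis
  proof (rule detS_col_dep[OF finT0 i0])
    show "?c ?i0 \<noteq> 0" using chain_at[OF d, of 0 ends vs] ne pi0 by auto
    fix f assume "f \<in> T0"
    have "(\<Sum>f'\<in>T0. M \<phi> f f' * ?c f') = (\<Sum>x\<in>F. inc ends (rho f) x * chain ends vs es x)"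
      unfolding M_def by (rule sum_phi[OF phi])
    also have "\<dots> = 0" using telescope_walk[OF w finF, of "rho f"] hl by simp
    finally show "(\<Sum>f'\<in>T0. M \<phi> f f' * ?c f') = 0" .
  qed
qed

lemma det_M_disconnected:
  assumes phi: "bij_betw \<phi> T0 F" and FE: "F \<subseteq> E" and nc: "\<not> connected_on V ends F"
  shows "detS (M \<phi>) T0 = 0"
proof -
  define K where "K = {v. (r, v) \<in> (adj_rel ends F)\<^sup>*}"
  have rK: "r \<in> K" unfolding K_def by simp
  obtain u where u: "u \<in> V" "u \<notin> K"
  proof (rule ccontr)
    assume "\<not> thesis"
    hence all: "\<forall>u\<in>V. u \<in> K" using that by blast
    have "connected_on V ends F" unfolding connected_on_def
    proof (intro ballI)
      fix a b assume "a \<in> V" "b \<in> V"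
      hence "(r, a) \<in> (adj_rel ends F)\<^sup>*" "(r, b) \<in> (adj_rel ends F)\<^sup>*" using all unfolding K_def by auto
      thus "(a, b) \<in> (adj_rel ends F)\<^sup>*" using adj_rtrancl_sym[of r a] rtrancl_trans[of a r] by blast
    qed
    thus False using nc by simp
  qed
  have uW: "u \<in> W" using u rK unfolding W_def by auto
  let ?i0 = "inv_into T0 rho u"
  have i0: "?i0 \<in> T0" using uW rho_bij by (auto simp: bij_betw_def inv_into_into)
  have ri0: "rho ?i0 = u" using uW rho_bij by (auto simp: bij_betw_def f_inv_into_f)
  let ?c = "\<lambda>f. if rho f \<in> K then 0 else (1::int)"
  show ?thesis
  proof (rule detS_row_dep[OF finT0 i0])
    show "?c ?i0 \<noteq> 0" using ri0 u by simp
    fix f' assume f': "f' \<in> T0"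
    have xF: "\<phi> f' \<in> F" using phi f' by (auto simp: bij_betw_def)
    obtain a b where ab: "ends (\<phi> f') = (a, b)" by (cases "ends (\<phi> f')")
    have "fst (ends (\<phi> f')) \<in> V \<and> snd (ends (\<phi> f')) \<in> V" using EV FE xF by blast
    hence abV: "a \<in> V" "b \<in> V" using ab by auto
    have adj1: "(a, b) \<in> adj_rel ends F" "(b, a) \<in> adj_rel ends F"
      using xF ab unfolding adj_rel_def joins_def by auto
    have abK: "a \<in> K \<longleftrightarrow> b \<in> K" unfolding K_def
      using rtrancl_into_rtrancl[of r a _ b, OF _ adj1(1)] rtrancl_into_rtrancl[of r b _ a, OF _ adj1(2)] by auto
    have "(\<Sum>f\<in>T0. ?c f * M \<phi> f f') = (\<Sum>v\<in>W. (if v \<in> K then 0 else 1) * inc ends v (\<phi> f'))"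
      unfolding M_def using sum.reindex_bij_betw[OF rho_bij, of "\<lambda>v. (if v \<in> K then 0 else 1) * inc ends v (\<phi> f')"]
      by simp
    also have "\<dots> = (\<Sum>v\<in>V. (if v \<in> K then 0 else 1) * inc ends v (\<phi> f'))"
      unfolding W_def by (rule sum.mono_neutral_left) (use finV rK in auto)
    also have "\<dots> = (\<Sum>v\<in>V. (if v = b \<and> v \<notin> K then 1 else 0) - (if v = a \<and> v \<notin> K then 1 else 0))"
      by (rule sum.cong[OF refl]) (auto simp: inc_def ab)
    also have "\<dots> = (if b \<notin> K then 1 else 0) - (if a \<notin> K then 1 else 0)"
      using abV by (simp add: sum_subtractf sum_delta_pred[OF finV])
    also have "\<dots> = 0" using abK by simp
    finally show "(\<Sum>f\<in>T0. ?c f * M \<phi> f f') = 0" .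
  qed
qed

lemma det_M_tree:
  assumes phi: "bij_betw \<phi> T0 F" and FE: "F \<subseteq> E"
  shows "detS (M \<phi>) T0 * detS (M \<phi>) T0 = (if spanning_tree V E ends F then 1 else 0)"
proof (cases "spanning_tree V E ends F")
  case True
  thus ?thesis using det_M_connected[OF phi] unfolding spanning_tree_def by auto
next
  case False
  hence "\<not> connected_on V ends F \<or> has_cycle ends F" using FE unfolding spanning_tree_def by auto
  thus ?thesis using det_M_cycle[OF phi] det_M_disconnected[OF phi FE] False by auto
qed

end

context setting
begin

lemma detMid: "detS (M id) T0 * detS (M id) T0 = 1"
  by (rule det_M_connected[OF _ T0con]) simp

lemma tree_path_unique:
  assumes p1: "spath ends T0 vs1 es1" and p2: "spath ends T0 vs2 es2"
    and h: "hd vs1 = hd vs2" and l: "last vs1 = last vs2"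
  shows "vs1 = vs2 \<and> es1 = es2"
proof -
  let ?c1 = "chain ends vs1 es1" and ?c2 = "chain ends vs2 es2"
  have w1: "walk ends T0 vs1 es1" and w2: "walk ends T0 vs2 es2" using p1 p2 unfolding spath_def by auto
  have eq: "?c1 x = ?c2 x" if x: "x \<in> T0" for x
  proof (rule ccontr)
    assume ne: "?c1 x \<noteq> ?c2 x"
    have "detS (M id) T0 = 0"
    proof (rule detS_col_dep[OF finT0 x])
      show "(\<lambda>y. ?c1 y - ?c2 y) x \<noteq> 0" using ne by simp
      fix f assume "f \<in> T0"
      have "(\<Sum>j\<in>T0. M id f j * (?c1 j - ?c2 j)) = (\<Sum>j\<in>T0. inc ends (rho f) j * ?c1 j) - (\<Sum>j\<in>T0. inc ends (rho f) j * ?c2 j)"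
        unfolding M_def by (simp add: algebra_simps sum_subtractf)
      also have "\<dots> = 0" using telescope_walk[OF w1 finT0, of "rho f"] telescope_walk[OF w2 finT0, of "rho f"] h l by simp
      finally show "(\<Sum>j\<in>T0. M id f j * (?c1 j - ?c2 j)) = 0" .
    qed
    thus False using detMid by simp
  qed
  have d1: "distinct es1" and d2: "distinct es2"
    using spath_distinct_edges[OF p1] spath_distinct_edges[OF p2] .
  have s1: "set es1 \<subseteq> T0" and s2: "set es2 \<subseteq> T0" using w1 w2 unfolding walk_def by auto
  have "set es1 = set es2"
  proof (rule Set.set_eqI)
    fix x show "x \<in> set es1 \<longleftrightarrow> x \<in> set es2"
    proof (cases "x \<in> T0")
      case True
      thus ?thesis using chain_nz_iff[OF d1, of ends vs1 x] chain_nz_iff[OF d2, of ends vs2 x] eq[OF True] by simp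
    next
      case False thus ?thesis using s1 s2 by auto
    qed
  qed
  thus ?thesis using spath_unique_edges[OF p1 p2 h] by simp
qed

lemma tree_path_ok:
  assumes a: "a \<in> V" and b: "b \<in> V"
  shows "spath ends T0 (fst (tree_path ends T0 a b)) (snd (tree_path ends T0 a b))
       \<and> hd (fst (tree_path ends T0 a b)) = a \<and> last (fst (tree_path ends T0 a b)) = b"
proof -
  have "(a, b) \<in> (adj_rel ends T0)\<^sup>*" using T0con a b unfolding connected_on_def by auto
  from path_exists[OF this] obtain vs es where p: "spath ends T0 vs es" "hd vs = a" "last vs = b" by blast
  have "\<exists>!p. is_path ends T0 (fst p) (snd p) a b"
  proof (rule ex1I[of _ "(vs, es)"])
    show "is_path ends T0 (fst (vs, es)) (snd (vs, es)) a b" using p by (simp add: is_path_spath)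
    fix q assume "is_path ends T0 (fst q) (snd q) a b"
    hence q: "spath ends T0 (fst q) (snd q)" "hd (fst q) = a" "last (fst q) = b" by (auto simp: is_path_spath)
    have "fst q = vs \<and> snd q = es" using tree_path_unique[OF q(1) p(1)] q(2,3) p(2,3) by simp
    thus "q = (vs, es)" by (simp add: prod_eq_iff)
  qed
  hence "is_path ends T0 (fst (THE p. is_path ends T0 (fst p) (snd p) a b)) (snd (THE p. is_path ends T0 (fst p) (snd p) a b)) a b"
    by (rule theI'[where P="\<lambda>p. is_path ends T0 (fst p) (snd p) a b"])
  hence "is_path ends T0 (fst (tree_path ends T0 a b)) (snd (tree_path ends T0 a b)) a b"
    unfolding tree_path_def .
  thus ?thesis unfolding is_path_spath by simp
qed

definition "tp e = tree_path ends T0 (snd (ends e)) (fst (ends e))"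

lemma Dchain_eq:
  "Dchain ends T0 e x = (if fst (ends e) = snd (ends e) then 0 else chain ends (fst (tp e)) (snd (tp e)) x)"
  unfolding Dchain_def chain_def tp_def Let_def by simp

lemma tp_ok:
  assumes "e \<in> E"
  shows "spath ends T0 (fst (tp e)) (snd (tp e)) \<and> hd (fst (tp e)) = snd (ends e) \<and> last (fst (tp e)) = fst (ends e)"
  unfolding tp_def by (rule tree_path_ok) (use EV assms in auto)

lemma D_support:
  assumes "e \<in> E" "x \<notin> T0"
  shows "Dchain ends T0 e x = 0"
proof -
  have "set (snd (tp e)) \<subseteq> T0" using tp_ok[OF assms(1)] unfolding spath_def walk_def by auto
  hence "x \<notin> set (snd (tp e))" using assms(2) by blast
  thus ?thesis unfolding Dchain_eq using chain_notin[of x "snd (tp e)" ends "fst (tp e)"] by simp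
qed

lemma D_bd:
  assumes e: "e \<in> E"
  shows "(\<Sum>x\<in>T0. inc ends v x * Dchain ends T0 e x) = - inc ends v e"
proof (cases "fst (ends e) = snd (ends e)")
  case True
  thus ?thesis unfolding Dchain_eq inc_def by simp
next
  case False
  have w: "walk ends T0 (fst (tp e)) (snd (tp e))" using tp_ok[OF e] unfolding spath_def by auto
  have "(\<Sum>x\<in>T0. inc ends v x * Dchain ends T0 e x) = (\<Sum>x\<in>T0. inc ends v x * chain ends (fst (tp e)) (snd (tp e)) x)"
    unfolding Dchain_eq using False by simp
  also have "\<dots> = (if v = fst (ends e) then 1 else 0) - (if v = snd (ends e) then 1 else 0)"
    using telescope_walk[OF w finT0, of v] tp_ok[OF e] by simp
  also have "\<dots> = - inc ends v e" unfolding inc_def by simp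
  finally show ?thesis .
qed

lemma core:
  assumes C: "C \<subseteq> E - T0" and R: "R \<subseteq> T0" and cRC: "card R = card C"
  shows "detS (\<lambda>i j. Dchain ends T0 i (hb C R j)) C * detS (\<lambda>i j. Dchain ends T0 i (hb C R j)) C
       = (if spanning_tree V E ends ((T0 - R) \<union> C) then 1 else 0)"
proof -
  let ?D = "Dchain ends T0"
  define h where "h = hb C R"
  have finC: "finite C" using finite_subset[of C E] C finE by blast
  have finR: "finite R" using R finT0 by (rule finite_subset)
  have hb: "bij_betw h C R" unfolding h_def by (rule hb_bij[OF finC finR cRC])
  have hi: "bij_betw (inv_into C h) R C" by (rule bij_betw_inv_into[OF hb])
  define \<phi> where "\<phi> = (\<lambda>f. if f \<in> R then inv_into C h f else f)"
  define F where "F = (T0 - R) \<union> C"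
  have FE: "F \<subseteq> E" using C T0E unfolding F_def by auto
  have phi: "bij_betw \<phi> T0 F"
  proof -
    have b1: "bij_betw \<phi> R C" using hi by (rule bij_betw_cong[THEN iffD1, rotated]) (simp add: \<phi>_def)
    have b2: "bij_betw \<phi> (T0 - R) (T0 - R)" by (rule bij_betw_cong[THEN iffD1, rotated, of id]) (auto simp: \<phi>_def)
    have "bij_betw \<phi> (R \<union> (T0 - R)) (C \<union> (T0 - R))" by (rule bij_betw_combine[OF b1 b2]) (use C in auto)
    moreover have "R \<union> (T0 - R) = T0" using R by auto
    moreover have "C \<union> (T0 - R) = F" unfolding F_def by auto
    ultimately show ?thesis by simp
  qed
  have phiC: "\<phi> f \<in> C" if "f \<in> R" for f using that hi unfolding \<phi>_def by (auto simp: bij_betw_def)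
  define Q where "Q = (\<lambda>f'' f'. if f' \<in> R then - ?D (\<phi> f') f'' else (if f'' = f' then 1 else (0::int)))"
  have prod: "detS (M \<phi>) T0 = detS (\<lambda>i j. \<Sum>k\<in>T0. M id i k * Q k j) T0"
  proof (rule detS_cong)
    fix f f' assume f: "f \<in> T0" and f': "f' \<in> T0"
    show "M \<phi> f f' = (\<Sum>k\<in>T0. M id f k * Q k f')"
    proof (cases "f' \<in> R")
      case True
      have "\<phi> f' \<in> E" using phiC[OF True] C by auto
      hence "(\<Sum>k\<in>T0. M id f k * Q k f') = - (\<Sum>k\<in>T0. inc ends (rho f) k * ?D (\<phi> f') k)"
        unfolding M_def Q_def using True by (simp add: sum_negf)
      also have "\<dots> = inc ends (rho f) (\<phi> f')" using D_bd[OF \<open>\<phi> f' \<in> E\<close>] by simp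
      finally show ?thesis unfolding M_def by simp
    next
      case False
      have "(\<Sum>k\<in>T0. M id f k * Q k f') = (\<Sum>k\<in>T0. if k = f' then inc ends (rho f) k else 0)"
        unfolding M_def Q_def using False by (intro sum.cong refl) auto
      also have "\<dots> = inc ends (rho f) f'" using f' finT0 by (simp add: sum.delta')
      finally show ?thesis unfolding M_def \<phi>_def using False by simp
    qed
  qed
  also have "\<dots> = detS (M id) T0 * detS Q T0" by (rule detS_mult[OF finT0])
  also have "detS Q T0 = detS Q R"
    by (rule detS_unit_cols[OF finT0 R]) (auto simp: Q_def)
  also have "detS Q R = detS (\<lambda>a b. - ?D (\<phi> b) a) R"
    by (rule detS_cong) (auto simp: Q_def)
  also have "\<dots> = (-1) ^ card R * detS (\<lambda>a b. ?D (\<phi> b) a) R" by (rule detS_uminus)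
  also have "detS (\<lambda>a b. ?D (\<phi> b) a) R = detS (\<lambda>a b. ?D (\<phi> a) b) R"
    by (rule detS_transpose[OF finR])
  also have "\<dots> = detS (\<lambda>i j. ?D (\<phi> (h i)) (h j)) C"
  proof -
    have "h ` C = R" using hb by (auto simp: bij_betw_def)
    moreover have "inj_on h C" using hb by (auto simp: bij_betw_def)
    ultimately show ?thesis using detS_reindex[OF finC, of h "\<lambda>a b. ?D (\<phi> a) b"] by simp
  qed
  also have "\<dots> = detS (\<lambda>i j. ?D i (h j)) C"
  proof (rule detS_cong)
    fix i j assume i: "i \<in> C" and "j \<in> C"
    have "h i \<in> R" using hb i by (auto simp: bij_betw_def)
    moreover have "inv_into C h (h i) = i" using hb i by (auto simp: bij_betw_def inv_into_f_f)
    ultimately show "?D (\<phi> (h i)) (h j) = ?D i (h j)" unfolding \<phi>_def by simp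
  qed
  finally have eqM: "detS (M \<phi>) T0 = detS (M id) T0 * ((-1) ^ card R * detS (\<lambda>i j. ?D i (h j)) C)" .
  have "detS (M \<phi>) T0 * detS (M \<phi>) T0
      = (detS (M id) T0 * detS (M id) T0) * (((-1) ^ card R * (-1) ^ card R) * (detS (\<lambda>i j. ?D i (h j)) C * detS (\<lambda>i j. ?D i (h j)) C))"
    unfolding eqM by (simp only: mult_ac)
  also have "\<dots> = detS (\<lambda>i j. ?D i (h j)) C * detS (\<lambda>i j. ?D i (h j)) C"
    using detMid by (simp add: power_mult_distrib[symmetric])
  finally show ?thesis using det_M_tree[OF phi FE] unfolding h_def F_def by simp
qed

lemma detG:
  assumes C: "C \<subseteq> E - T0"
  shows "detS (\<lambda>i j. \<Sum>f\<in>T0. Dchain ends T0 i f * Dchain ends T0 j f) C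
       = int (card {R. R \<subseteq> T0 \<and> card R = card C \<and> spanning_tree V E ends ((T0 - R) \<union> C)})"
proof -
  let ?D = "Dchain ends T0"
  have finC: "finite C" using finite_subset[of C E] C finE by blast
  let ?S = "{R. R \<subseteq> T0 \<and> card R = card C}"
  have finS: "finite ?S" using finT0 by (auto intro: finite_subset[of _ "Pow T0"])
  have "detS (\<lambda>i j. \<Sum>f\<in>T0. ?D i f * ?D j f) C
      = (\<Sum>R\<in>?S. detS (\<lambda>i j. ?D i (hb C R j)) C * detS (\<lambda>i j. ?D j (hb C R i)) C)"
    using detS_CB[OF finC finT0, of ?D "\<lambda>f j. ?D j f"] by simp
  also have "\<dots> = (\<Sum>R\<in>?S. if spanning_tree V E ends ((T0 - R) \<union> C) then 1 else 0)"
  proof (rule sum.cong[OF refl])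
    fix R assume "R \<in> ?S"
    hence R: "R \<subseteq> T0" "card R = card C" by auto
    have "detS (\<lambda>i j. ?D j (hb C R i)) C = detS (\<lambda>i j. ?D i (hb C R j)) C"
      using detS_transpose[OF finC, of "\<lambda>i j. ?D i (hb C R j)"] by simp
    thus "detS (\<lambda>i j. ?D i (hb C R j)) C * detS (\<lambda>i j. ?D j (hb C R i)) C
        = (if spanning_tree V E ends ((T0 - R) \<union> C) then 1 else 0)"
      using core[OF C R] by simp
  qed
  also have "\<dots> = int (card {R. R \<subseteq> T0 \<and> card R = card C \<and> spanning_tree V E ends ((T0 - R) \<union> C)})"
  proof -
    have "{R. R \<subseteq> T0 \<and> card R = card C \<and> spanning_tree V E ends ((T0 - R) \<union> C)} = ?S \<inter> {R. spanning_tree V E ends ((T0 - R) \<union> C)}"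
      by auto
    thus ?thesis using finS by (simp add: sum.If_cases)
  qed
  finally show ?thesis .
qed

end

lemma detS_of_int: "detS (\<lambda>i j. (of_int (A i j) :: 'b::comm_ring_1)) S = of_int (detS A S)"
  unfolding detS_def by (simp add: of_int_sum of_int_prod)

lemma sum_nth_distinct:
  assumes "distinct xs"
  shows "(\<Sum>k\<in>{0..<length xs}. g (xs ! k)) = (\<Sum>x\<in>set xs. g x)"
proof -
  have "set xs = (!) xs ` {0..<length xs}" by (auto simp: set_conv_nth)
  moreover have "inj_on ((!) xs) {0..<length xs}" using assms by (simp add: inj_on_nth)
  ultimately show ?thesis by (simp add: sum.reindex)
qed

context setting
begin

definition G :: "'e \<Rightarrow> 'e \<Rightarrow> int" where
  "G e e' = (\<Sum>f\<in>T0. Dchain ends T0 e f * Dchain ends T0 e' f)"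

lemma finN: "finite (E - T0)" using finE by simp

lemma tree_card: "spanning_tree V E ends T \<Longrightarrow> card T = card T0"
proof -
  assume T: "spanning_tree V E ends T"
  have Vne: "V \<noteq> {}" using r by auto
  have "Suc (card T) = card V" by (rule spanning_tree_card[OF finV Vne finE EV T])
  moreover have "Suc (card T0) = card V" by (rule spanning_tree_card[OF finV Vne finE EV T0])
  ultimately show ?thesis by simp
qed

lemma cnt:
  "(\<Sum>C\<in>{C \<in> Pow (E - T0). card C = j}. card {R. R \<subseteq> T0 \<and> card R = card C \<and> spanning_tree V E ends ((T0 - R) \<union> C)})
     = ST V E ends T0 j"
proof -
  let ?A = "{C \<in> Pow (E - T0). card C = j}"
  let ?B = "\<lambda>C. {R. R \<subseteq> T0 \<and> card R = card C \<and> spanning_tree V E ends ((T0 - R) \<union> C)}"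
  let ?T = "{T. spanning_tree V E ends T \<and> card (T \<inter> (E - T0)) = j}"
  have finA: "finite ?A" using finN by simp
  have finB: "\<forall>C\<in>?A. finite (?B C)" using finT0 by (auto intro: finite_subset[of _ "Pow T0"])
  have "(\<Sum>C\<in>?A. card (?B C)) = card (SIGMA C:?A. ?B C)" by (rule card_SigmaI[OF finA finB, symmetric])
  also have "\<dots> = card ?T"
  proof (rule bij_betw_same_card[of "\<lambda>(C, R). (T0 - R) \<union> C"])
    show "bij_betw (\<lambda>(C, R). (T0 - R) \<union> C) (SIGMA C:?A. ?B C) ?T"
    proof (rule bij_betw_byWitness[where f'="\<lambda>T. (T \<inter> (E - T0), T0 - T)"])
      show "\<forall>a\<in>(SIGMA C:?A. ?B C). (\<lambda>T. (T \<inter> (E - T0), T0 - T)) ((\<lambda>(C, R). (T0 - R) \<union> C) a) = a"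
        by auto
      show "\<forall>a'\<in>?T. (\<lambda>(C, R). (T0 - R) \<union> C) ((\<lambda>T. (T \<inter> (E - T0), T0 - T)) a') = a'"
        using T0E unfolding spanning_tree_def by auto
      show "(\<lambda>(C, R). (T0 - R) \<union> C) ` (SIGMA C:?A. ?B C) \<subseteq> ?T"
      proof
        fix T assume "T \<in> (\<lambda>(C, R). (T0 - R) \<union> C) ` (SIGMA C:?A. ?B C)"
        then obtain C R where C: "C \<in> ?A" and R: "R \<in> ?B C" and T: "T = (T0 - R) \<union> C" by auto
        have "((T0 - R) \<union> C) \<inter> (E - T0) = C" using C by auto
        thus "T \<in> ?T" using C R T by auto
      qed
      show "(\<lambda>T. (T \<inter> (E - T0), T0 - T)) ` ?T \<subseteq> (SIGMA C:?A. ?B C)"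
      proof
        fix T0' assume "T0' \<in> (\<lambda>T. (T \<inter> (E - T0), T0 - T)) ` ?T"
        then obtain T where T: "spanning_tree V E ends T" and j: "card (T \<inter> (E - T0)) = j"
          and T0': "T0' = (T \<inter> (E - T0), T0 - T)" by auto
        have TE: "T \<subseteq> E" using T unfolding spanning_tree_def by auto
        have finT: "finite T" using TE finE by (rule finite_subset)
        have ct: "card T = card T0" by (rule tree_card[OF T])
        have split: "card T = card (T \<inter> T0) + card (T \<inter> (E - T0))"
        proof -
          have "T = (T \<inter> T0) \<union> (T \<inter> (E - T0))" using TE by auto
          moreover have "card ((T \<inter> T0) \<union> (T \<inter> (E - T0))) = card (T \<inter> T0) + card (T \<inter> (E - T0))"
            by (rule card_Un_disjoint) (use finT in auto)
          ultimately show ?thesis by simp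
        qed
        have "card (T0 - T) = card T0 - card (T0 \<inter> T)" using finT0 by (simp add: card_Diff_subset_Int Diff_Int2[symmetric] card_Diff_subset)
        hence "card (T0 - T) = card (T \<inter> (E - T0))" using ct split by (simp add: Int_commute)
        moreover have "(T0 - (T0 - T)) \<union> (T \<inter> (E - T0)) = T" using TE by auto
        ultimately show "T0' \<in> (SIGMA C:?A. ?B C)" using T j finN T0' by auto
      qed
    qed
  qed
  finally show ?thesis unfolding ST_def .
qed

lemma wcount:
  "(\<Sum>C\<in>Pow (E - T0). w (card C) * real (card {R. R \<subseteq> T0 \<and> card R = card C \<and> spanning_tree V E ends ((T0 - R) \<union> C)}))
    = (\<Sum>j=0..card (E - T0). w j * real (ST V E ends T0 j))"
proof -
  let ?h = "\<lambda>C. card {R. R \<subseteq> T0 \<and> card R = card C \<and> spanning_tree V E ends ((T0 - R) \<union> C)}"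
  have sub: "card ` Pow (E - T0) \<subseteq> {0..card (E - T0)}" using finN by (auto intro: card_mono)
  have "(\<Sum>C\<in>Pow (E - T0). w (card C) * real (?h C))
      = (\<Sum>j\<in>{0..card (E - T0)}. \<Sum>C\<in>{C \<in> Pow (E - T0). card C = j}. w (card C) * real (?h C))"
    by (rule sum.group[symmetric]) (use finN sub in auto)
  also have "\<dots> = (\<Sum>j\<in>{0..card (E - T0)}. w j * real (ST V E ends T0 j))"
  proof (rule sum.cong[OF refl])
    fix j
    have "(\<Sum>C\<in>{C \<in> Pow (E - T0). card C = j}. w (card C) * real (?h C))
        = w j * real (\<Sum>C\<in>{C \<in> Pow (E - T0). card C = j}. ?h C)"
      by (simp add: sum_distrib_left)
    also have "\<dots> = w j * real (ST V E ends T0 j)" by (simp only: cnt)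
    finally show "(\<Sum>C\<in>{C \<in> Pow (E - T0). card C = j}. w (card C) * real (?h C)) = w j * real (ST V E ends T0 j)" .
  qed
  finally show ?thesis .
qed

lemma ST0: "ST V E ends T0 0 = 1"
proof -
  have "{T. spanning_tree V E ends T \<and> card (T \<inter> (E - T0)) = 0} = {T0}"
  proof (intro equalityI subsetI)
    fix T assume "T \<in> {T. spanning_tree V E ends T \<and> card (T \<inter> (E - T0)) = 0}"
    hence T: "spanning_tree V E ends T" and c: "card (T \<inter> (E - T0)) = 0" by auto
    have TE: "T \<subseteq> E" using T unfolding spanning_tree_def by auto
    have "T \<inter> (E - T0) = {}" using c finE by (meson card_0_eq finite_Diff finite_Int)
    hence "T \<subseteq> T0" using TE by auto
    moreover have "card T = card T0" by (rule tree_card[OF T])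
    ultimately have "T = T0" using finT0 by (simp add: card_subset_eq)
    thus "T \<in> {T0}" by simp
  next
    fix T assume "T \<in> {T0}"
    thus "T \<in> {T. spanning_tree V E ends T \<and> card (T \<inter> (E - T0)) = 0}" using T0 by auto
  qed
  thus ?thesis unfolding ST_def by simp
qed

lemma detS_G: "C \<subseteq> E - T0 \<Longrightarrow> detS G C = int (card {R. R \<subseteq> T0 \<and> card R = card C \<and> spanning_tree V E ends ((T0 - R) \<union> C)})"
  unfolding G_def by (rule detG)

lemma charpoly:
  fixes U :: real
  shows "detS (\<lambda>e e'. (if e = e' then U else 0) + - real_of_int (G e e')) (E - T0)
       = (\<Sum>j=0..card (E - T0). (-1) ^ j * U ^ (card (E - T0) - j) * real (ST V E ends T0 j))"
proof -
  let ?n = "card (E - T0)"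
  have "detS (\<lambda>e e'. (if e = e' then U else 0) + - real_of_int (G e e')) (E - T0)
      = (\<Sum>C\<in>Pow (E - T0). (\<Prod>i\<in>(E - T0) - C. U) * detS (\<lambda>e e'. - real_of_int (G e e')) C)"
    by (rule detS_diag_plus[OF finN])
  also have "\<dots> = (\<Sum>C\<in>Pow (E - T0). ((-1) ^ card C * U ^ (?n - card C)) * real (card {R. R \<subseteq> T0 \<and> card R = card C \<and> spanning_tree V E ends ((T0 - R) \<union> C)}))"
  proof (rule sum.cong[OF refl])
    fix C assume "C \<in> Pow (E - T0)"
    hence C: "C \<subseteq> E - T0" by simp
    have fC: "finite C" using C finN by (rule finite_subset)
    have "(\<Prod>i\<in>(E - T0) - C. U) = U ^ (?n - card C)" using C finN by (simp add: card_Diff_subset fC)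
    moreover have "detS (\<lambda>e e'. - real_of_int (G e e')) C = (-1) ^ card C * real_of_int (detS G C)"
      using detS_uminus[of "\<lambda>e e'. real_of_int (G e e')" C] detS_of_int[of G C] by simp
    ultimately show "(\<Prod>i\<in>(E - T0) - C. U) * detS (\<lambda>e e'. - real_of_int (G e e')) C
        = ((-1) ^ card C * U ^ (?n - card C)) * real (card {R. R \<subseteq> T0 \<and> card R = card C \<and> spanning_tree V E ends ((T0 - R) \<union> C)})"
      using detS_G[OF C] by simp
  qed
  also have "\<dots> = (\<Sum>j=0..?n. ((-1) ^ j * U ^ (?n - j)) * real (ST V E ends T0 j))"
    by (rule wcount)
  finally show ?thesis by simp
qed

lemma meshdet:
  "detS (\<lambda>e e'. (if e = e' then 1 else 0) + real_of_int (G e e')) (E - T0)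
       = (\<Sum>j=0..card (E - T0). real (ST V E ends T0 j))"
proof -
  have "detS (\<lambda>e e'. (if e = e' then 1 else 0) + real_of_int (G e e')) (E - T0)
      = (\<Sum>C\<in>Pow (E - T0). (\<Prod>i\<in>(E - T0) - C. 1) * detS (\<lambda>e e'. real_of_int (G e e')) C)"
    by (rule detS_diag_plus[OF finN])
  also have "\<dots> = (\<Sum>C\<in>Pow (E - T0). (\<lambda>_. 1) (card C) * real (card {R. R \<subseteq> T0 \<and> card R = card C \<and> spanning_tree V E ends ((T0 - R) \<union> C)}))"
  proof (rule sum.cong[OF refl])
    fix C assume "C \<in> Pow (E - T0)"
    hence C: "C \<subseteq> E - T0" by simp
    show "(\<Prod>i\<in>(E - T0) - C. 1) * detS (\<lambda>e e'. real_of_int (G e e')) C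
       = (\<lambda>_. 1) (card C) * real (card {R. R \<subseteq> T0 \<and> card R = card C \<and> spanning_tree V E ends ((T0 - R) \<union> C)})"
      using detS_of_int[of G C] detS_G[OF C] by simp
  qed
  also have "\<dots> = (\<Sum>j=0..card (E - T0). (\<lambda>_. 1) j * real (ST V E ends T0 j))"
    by (rule wcount)
  finally show ?thesis by simp
qed

lemma Z_sum:
  assumes e: "e \<in> E - T0" and e': "e' \<in> E - T0"
  shows "(\<Sum>x\<in>E. Zcycle ends T0 e x * Zcycle ends T0 e' x) = (if e = e' then 1 else 0) + G e e'"
proof -
  have E: "E = T0 \<union> (E - T0)" using T0E by auto
  have "(\<Sum>x\<in>E. Zcycle ends T0 e x * Zcycle ends T0 e' x)
     = (\<Sum>x\<in>T0. Zcycle ends T0 e x * Zcycle ends T0 e' x) + (\<Sum>x\<in>E - T0. Zcycle ends T0 e x * Zcycle ends T0 e' x)"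
    by (subst E, rule sum.union_disjoint) (use finT0 finN in auto)
  also have "(\<Sum>x\<in>T0. Zcycle ends T0 e x * Zcycle ends T0 e' x) = G e e'"
    unfolding G_def Zcycle_def by (rule sum.cong[OF refl]) (use e e' in auto)
  also have "(\<Sum>x\<in>E - T0. Zcycle ends T0 e x * Zcycle ends T0 e' x) = (\<Sum>x\<in>E - T0. if x = e then (if e = e' then 1 else 0) else 0)"
    unfolding Zcycle_def by (rule sum.cong[OF refl]) (use e e' D_support in auto)
  also have "\<dots> = (if e = e' then 1 else 0)" using e finN by (simp add: sum.delta')
  finally show ?thesis by simp
qed

end

theorem theorem2p2:
  fixes V :: "'v set" and E :: "'e set" and ends :: "'e \<Rightarrow> 'v \<times> 'v"
    and T0 :: "'e set" and es fs :: "'e list"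
  assumes "finite V" and "V \<noteq> {}" and "finite E"
    and "\<forall>e\<in>E. fst (ends e) \<in> V \<and> snd (ends e) \<in> V"
    and "connected_on V ends E"
    and "spanning_tree V E ends T0"
    and "distinct es" and "set es = E - T0"
    and "distinct fs" and "set fs = T0"
  shows "(\<forall>U::real.
            det ((U + 1) \<cdot>\<^sub>m 1\<^sub>m (length es) - mesh E ends T0 es)
              = det (U \<cdot>\<^sub>m 1\<^sub>m (length es) - mesh_red ends T0 es fs)
          \<and> det (U \<cdot>\<^sub>m 1\<^sub>m (length es) - mesh_red ends T0 es fs)
              = U ^ length es + (\<Sum>j=1..length es.
                   (-1) ^ j * real (ST V E ends T0 j) * U ^ (length es - j)))
         \<and> det (mesh E ends T0 es) = real (\<Sum>j=0..length es. ST V E ends T0 j)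
         \<and> (\<Sum>j=0..length es. ST V E ends T0 j) = card {T. spanning_tree V E ends T}"
proof -
  obtain r where r: "r \<in> V" using assms(2) by blast
  interpret S: setting V E ends T0 r
    by unfold_locales (use assms r in auto)
  let ?n = "length es"
  let ?D = "Dchain ends T0"
  have nN: "?n = card (E - T0)" using assms(7,8) distinct_card by fastforce
  have esE: "es ! i \<in> E - T0" if "i < ?n" for i using assms(8) that nth_mem by blast
  have esi: "es ! i = es ! j \<longleftrightarrow> i = j" if "i < ?n" "j < ?n" for i j
    using assms(7) that by (simp add: nth_eq_iff_index_eq)
  have Gmat: "(transpose_mat (Ymat ends T0 es fs) * Ymat ends T0 es fs) $$ (i, j) = real_of_int (S.G (es ! i) (es ! j))"
    if "i < ?n" "j < ?n" for i j
  proof -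
    have "(transpose_mat (Ymat ends T0 es fs) * Ymat ends T0 es fs) $$ (i, j)
        = (\<Sum>k\<in>{0..<length fs}. real_of_int (?D (es ! i) (fs ! k)) * real_of_int (?D (es ! j) (fs ! k)))"
      using that by (simp add: Ymat_def scalar_prod_def)
    also have "\<dots> = (\<Sum>f\<in>set fs. real_of_int (?D (es ! i) f) * real_of_int (?D (es ! j) f))"
      by (rule sum_nth_distinct[OF assms(9), of "\<lambda>f. real_of_int (?D (es ! i) f) * real_of_int (?D (es ! j) f)"])
    also have "\<dots> = real_of_int (S.G (es ! i) (es ! j))" unfolding S.G_def assms(10) by simp
    finally show ?thesis .
  qed
  have dimr: "dim_row (mesh_red ends T0 es fs) = ?n" "dim_col (mesh_red ends T0 es fs) = ?n"
    by (simp_all add: mesh_red_def Ymat_def)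
  have Gm: "mesh_red ends T0 es fs $$ (i, j) = real_of_int (S.G (es ! i) (es ! j))" if "i < ?n" "j < ?n" for i j
    unfolding mesh_red_def using Gmat[OF that] .
  have red: "U \<cdot>\<^sub>m 1\<^sub>m ?n - mesh_red ends T0 es fs
      = mat ?n ?n (\<lambda>(i, j). (\<lambda>e e'. (if e = e' then U else 0) + - real_of_int (S.G e e')) (es ! i) (es ! j))" for U :: real
    by (rule eq_matI) (auto simp: dimr Gm esi)
  have Zm: "mesh E ends T0 es $$ (i, j) = (if i = j then 1 else 0) + real_of_int (S.G (es ! i) (es ! j))"
    if "i < ?n" "j < ?n" for i j
  proof -
    have "mesh E ends T0 es $$ (i, j) = real_of_int (\<Sum>x\<in>E. Zcycle ends T0 (es ! i) x * Zcycle ends T0 (es ! j) x)"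
      unfolding mesh_def using that by (simp del: of_int_sum of_int_mult)
    also have "\<dots> = (if i = j then 1 else 0) + real_of_int (S.G (es ! i) (es ! j))"
      using S.Z_sum[OF esE[OF that(1)] esE[OF that(2)]] esi[OF that] by simp
    finally show ?thesis .
  qed
  have meshm: "mesh E ends T0 es = mat ?n ?n (\<lambda>(i, j). (\<lambda>e e'. (if e = e' then 1 else 0) + real_of_int (S.G e e')) (es ! i) (es ! j))"
    by (rule eq_matI) (auto simp: Zm esi, auto simp: mesh_def)
  have full: "(U + 1) \<cdot>\<^sub>m 1\<^sub>m ?n - mesh E ends T0 es = U \<cdot>\<^sub>m 1\<^sub>m ?n - mesh_red ends T0 es fs" for U :: real
    unfolding red meshm by (rule eq_matI) (auto simp: esi)
  have cp: "det (U \<cdot>\<^sub>m 1\<^sub>m ?n - mesh_red ends T0 es fs)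
      = U ^ ?n + (\<Sum>j=1..?n. (-1) ^ j * real (ST V E ends T0 j) * U ^ (?n - j))" for U :: real
  proof -
    have "det (U \<cdot>\<^sub>m 1\<^sub>m ?n - mesh_red ends T0 es fs)
       = detS (\<lambda>e e'. (if e = e' then U else 0) + - real_of_int (S.G e e')) (set es)"
      unfolding red by (rule det_list_detS[OF assms(7)])
    also have "\<dots> = (\<Sum>j=0..?n. (-1) ^ j * U ^ (?n - j) * real (ST V E ends T0 j))"
      unfolding assms(8) nN by (rule S.charpoly)
    also have "\<dots> = U ^ ?n + (\<Sum>j=1..?n. (-1) ^ j * U ^ (?n - j) * real (ST V E ends T0 j))"
      by (simp add: sum.atLeast_Suc_atMost S.ST0)
    finally show ?thesis by (simp add: mult_ac)
  qed
  have md: "det (mesh E ends T0 es) = real (\<Sum>j=0..?n. ST V E ends T0 j)"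
  proof -
    have "det (mesh E ends T0 es) = detS (\<lambda>e e'. (if e = e' then 1 else 0) + real_of_int (S.G e e')) (set es)"
      unfolding meshm by (rule det_list_detS[OF assms(7)])
    also have "\<dots> = (\<Sum>j=0..?n. real (ST V E ends T0 j))"
      unfolding assms(8) nN by (rule S.meshdet)
    finally show ?thesis by simp
  qed
  have cards: "(\<Sum>j=0..?n. ST V E ends T0 j) = card {T. spanning_tree V E ends T}"
  proof -
    let ?T = "{T. spanning_tree V E ends T}"
    have finT: "finite ?T" using assms(3) unfolding spanning_tree_def by (auto intro: finite_subset[of _ "Pow E"])
    have sub: "(\<lambda>T. card (T \<inter> (E - T0))) ` ?T \<subseteq> {0..?n}"
      using nN assms(3) by (auto intro!: card_mono)
    have "card ?T = (\<Sum>T\<in>?T. 1)" by simp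
    also have "\<dots> = (\<Sum>j\<in>{0..?n}. \<Sum>T\<in>{T \<in> ?T. card (T \<inter> (E - T0)) = j}. 1)"
      by (rule sum.group[symmetric, OF finT _ sub]) simp
    also have "\<dots> = (\<Sum>j=0..?n. ST V E ends T0 j)" unfolding ST_def by simp
    finally show ?thesis by simp
  qed
  show ?thesis using full cp md cards by simp
qed


end
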